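(* Let $\chi\in\mathscr{C}^\infty_c(\mathbb{R}_+)$ and $\theta\in(0,\pi)$ be fixed. For $w\in\mathscr{C}^\infty_c(\mathbb{R}_+)$ let $$(\mathscr{A}^+_{\pi/2}-\mathscr{A}^+_\theta)(w)(t):=\int_0^\infty\big(\mathfrak{K}_{\pi/2}(t/s)-\mathfrak{K}_\theta(t/s)\big)w(s)(st)^{-1/4}\,ds,\qquad t>0,$$ where $\mathfrak{K}_\alpha(\tau):=\big(4\sin^2(\alpha)+(\sqrt\tau-1/\sqrt\tau)^2\big)^{-1/4}$. Then $$\sup_{u\in\mathscr{C}^\infty_0(\mathbb{R}_+)\setminus\{0\}}\frac{\|(\mathscr{A}^+_{\pi/2}-\mathscr{A}^+_\theta)(\chi u)\|_{\tilde{\mathrm{H}}^{1/2}(\mathbb{R}_+)}}{\|u\|_{\mathrm{L}^2(\mathbb{R}_+)}}<+\infty.$$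
   Context: $\mathbb{R}_+=[0,\infty)$. $\mathscr{C}^\infty_0(\mathbb{R}_+)$: smooth functions on $\mathbb{R}_+$ with bounded support contained in $(0,\infty)$; $\mathscr{C}^\infty_c(\mathbb{R}_+)$: restrictions to $\mathbb{R}_+$ of smooth compactly supported functions on $\mathbb{R}$. For a function $v$ on $\mathbb{R}_+$, $\|v\|^2_{\tilde{\mathrm{H}}^{1/2}(\mathbb{R}_+)}:=\|v\|^2_{\mathrm{L}^2(\mathbb{R}_+)}+\int_{\mathbb{R}_+\times\mathbb{R}_+}\frac{|v(x)-v(y)|^2}{|x-y|^2}\,dx\,dy+2\int_0^\infty|v(x)|^2\frac{dx}{x}$ (equivalently, the $\mathrm{H}^{1/2}(\mathbb{R})$ norm of the extension of $v$ by zero). *)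

theory Defs
  imports "HOL-Analysis.Analysis"
begin

definition smooth_fun :: "(real \<Rightarrow> real) \<Rightarrow> bool" where
  "smooth_fun f \<longleftrightarrow> (\<forall>k::nat. \<forall>x. ((deriv ^^ k) f) differentiable (at x))"

text \<open>C^infty_c(R_+): restrictions to [0,inf) of smooth compactly supported functions on R.\<close>
definition Cc_plus :: "(real \<Rightarrow> real) \<Rightarrow> bool" where
  "Cc_plus f \<longleftrightarrow> (\<exists>g. smooth_fun g \<and> bounded {x. g x \<noteq> 0} \<and> (\<forall>x\<ge>0. f x = g x))"

text \<open>C^infty_0(R_+): smooth functions whose support is bounded and contained in (0,inf),
  i.e. vanishing outside some [a,b] with a > 0 (represented as smooth functions on R).\<close>
definition C0_plus :: "(real \<Rightarrow> real) \<Rightarrow> bool" where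
  "C0_plus u \<longleftrightarrow> smooth_fun u \<and> (\<exists>a b. 0 < a \<and> (\<forall>x. x \<notin> {a..b} \<longrightarrow> u x = 0))"

definition frakK :: "real \<Rightarrow> real \<Rightarrow> real" where
  "frakK \<alpha> \<tau> = (4 * (sin \<alpha>)\<^sup>2 + (sqrt \<tau> - 1 / sqrt \<tau>)\<^sup>2) powr (-1/4)"

definition A_diff :: "real \<Rightarrow> (real \<Rightarrow> real) \<Rightarrow> real \<Rightarrow> real" where
  "A_diff \<theta> w t = (LINT s:{0<..}|lborel.
       (frakK (pi/2) (t/s) - frakK \<theta> (t/s)) * w s * (s * t) powr (-1/4))"

definition L2_sq :: "(real \<Rightarrow> real) \<Rightarrow> ennreal" where
  "L2_sq v = (\<integral>\<^sup>+ x. ennreal ((v x)\<^sup>2) * indicator {0<..} x \<partial>lborel)"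

definition Ht_half_sq :: "(real \<Rightarrow> real) \<Rightarrow> ennreal" where
  "Ht_half_sq v = L2_sq v
     + (\<integral>\<^sup>+ p. ennreal ((v (fst p) - v (snd p))\<^sup>2 / (fst p - snd p)\<^sup>2)
                 * indicator ({0<..} \<times> {0<..}) p \<partial>(lborel \<Otimes>\<^sub>M lborel))
     + 2 * (\<integral>\<^sup>+ x. ennreal ((v x)\<^sup>2 / x) * indicator {0<..} x \<partial>lborel)"

end

theory Submission
  imports Defs
begin
definition Kst :: "real \<Rightarrow> real \<Rightarrow> real \<Rightarrow> real" where
  "Kst c t s = (t^2 + 2*t* s + s^2) powr (-1/4) - (t^2 - 2*c*t* s + s^2) powr (-1/4)"

definition dKst :: "real \<Rightarrow> real \<Rightarrow> real \<Rightarrow> real" where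
  "dKst c t s = (1/2) * ((t - c* s) * (t^2 - 2*c*t* s + s^2) powr (-5/4)
                 - (t + s) * (t^2 + 2*t* s + s^2) powr (-5/4))"

definition Ek :: "real \<Rightarrow> real \<Rightarrow> real" where
  "Ek t s = t * s * (max t s) powr (-5/2)"

lemma frakK_eq:
  assumes t: "t > 0" and s: "s > 0"
  shows "frakK \<alpha> (t/s) * (s*t) powr (-1/4) = (t^2 - 2*cos(2*\<alpha>)*t* s + s^2) powr (-1/4)"
proof -
  have sq: "(sqrt (t/s) - 1 / sqrt (t/s))^2 = t/s - 2 + s/t"
    using t s by (simp add: power2_eq_square field_simps real_sqrt_divide)
  have c2: "cos (2*\<alpha>) = 1 - 2 * (sin \<alpha>)^2" by (simp add: cos_double_sin)
  have e: "4 * (sin \<alpha>)\<^sup>2 + (sqrt (t/s) - 1 / sqrt (t/s))\<^sup>2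
        = (t^2 - 2*cos(2*\<alpha>)*t* s + s^2) / (t* s)"
    unfolding sq c2 using t s by (simp add: field_simps power2_eq_square)
  have N0: "t^2 - 2*cos(2*\<alpha>)*t* s + s^2 \<ge> 0"
  proof -
    have "t^2 - 2*cos(2*\<alpha>)*t* s + s^2 = (t-s)^2 + 4*(sin \<alpha>)^2*(t* s)"
      unfolding c2 by (simp add: power2_eq_square algebra_simps)
    also have "\<dots> \<ge> 0" using t s by (intro add_nonneg_nonneg mult_nonneg_nonneg) auto
    finally show ?thesis .
  qed
  have "frakK \<alpha> (t/s) * (s*t) powr (-1/4)
      = ((t^2 - 2*cos(2*\<alpha>)*t* s + s^2) / (t* s)) powr (-1/4) * (s*t) powr (-1/4)"
    unfolding frakK_def e ..
  also have "\<dots> = ((t^2 - 2*cos(2*\<alpha>)*t* s + s^2) / (t* s) * (s*t)) powr (-1/4)"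
    using t s N0 by (subst powr_mult) auto
  also have "(t^2 - 2*cos(2*\<alpha>)*t* s + s^2) / (t* s) * (s*t) = t^2 - 2*cos(2*\<alpha>)*t* s + s^2"
    using t s by (simp add: field_simps)
  finally show ?thesis .
qed

lemma Nc_lower:
  fixes c t s :: real
  assumes "-1 \<le> c" "c \<le> 1" "t > 0" "s > 0"
  shows "t^2 - 2*c*t* s + s^2 \<ge> ((1-c)/2) * (t^2 + s^2)"
proof (cases "c \<ge> 0")
  case True
  have "(t-s)^2 \<ge> 0" by simp
  hence "t^2 + s^2 \<ge> 2*t* s" by (simp add: power2_eq_square algebra_simps)
  hence h1: "((1+c)/2)*(t^2+s^2) \<ge> ((1+c)/2)*(2*t* s)" using assms by (intro mult_left_mono) auto
  have h2: "((1+c)/2)*(2*t* s) \<ge> 2*c*t* s" using assms True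
    by (simp add: algebra_simps)
  have e: "t^2 - 2*c*t* s + s^2 - ((1-c)/2)*(t^2+s^2) = ((1+c)/2)*(t^2+s^2) - 2*c*t* s"
    by (simp add: field_simps)
  show ?thesis using h1 h2 e by linarith
next
  case False
  have "2*c*t * s \<le> 0" using False assms by (simp add: mult_nonpos_nonneg mult_le_0_iff)
  moreover have "((1+c)/2)*(t^2+s^2) \<ge> 0" using assms by simp
  moreover have e: "t^2 - 2*c*t* s + s^2 - ((1-c)/2)*(t^2+s^2) = ((1+c)/2)*(t^2+s^2) - 2*c*t* s"
    by (simp add: field_simps)
  ultimately show ?thesis by linarith
qed

lemma max_sq_le: "(t::real) > 0 \<Longrightarrow> s > 0 \<Longrightarrow> (max t s)^2 \<le> t^2 + s^2"
  by (cases "t \<le> s") (auto simp: max_def)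

lemma powr_conv_diff:
  fixes x y a :: real
  assumes "0 < x" "x \<le> y" "a > 0"
  shows "x powr (-a) - y powr (-a) \<le> a * (y - x) * x powr (-a-1)"
proof (cases "x = y")
  case True then show ?thesis by simp
next
  case False
  hence xy: "x < y" using assms by simp
  have "\<And>z. x \<le> z \<Longrightarrow> z \<le> y \<Longrightarrow> DERIV (\<lambda>z. z powr (-a)) z :> (-a) * z powr (-a - 1)"
  proof -
    fix z assume "x \<le> z" "z \<le> y"
    hence "z > 0" using assms by simp
    from DERIV_fun_powr[OF DERIV_ident this, of "-a"] show "DERIV (\<lambda>z. z powr (-a)) z :> (-a) * z powr (-a - 1)"
      by simp
  qed
  from MVT2[OF xy this] obtain z where z: "x < z" "z < y"
    "y powr (-a) - x powr (-a) = (y - x) * ((-a) * z powr (-a - 1))" by blast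
  have "z powr (-a-1) \<le> x powr (-a-1)"
    using z assms by (intro powr_mono2') auto
  hence "(y - x) * a * z powr (-a - 1) \<le> (y - x) * a * x powr (-a-1)"
    using xy assms by (intro mult_left_mono) auto
  thus ?thesis using z(3) by (simp add: algebra_simps)
qed

lemma powr_sq_max:
  fixes M r :: real assumes "M > 0"
  shows "(M^2) powr r = M powr (2*r)"
  using assms by (simp add: powr_powr[symmetric] powr_numeral)

lemma Kst_bound:
  fixes c t s :: real
  assumes c: "-1 \<le> c" "c < 1" and t: "t > 0" and s: "s > 0"
  shows "\<bar>Kst c t s\<bar> \<le> ((1-c)/2) powr (-5/4) * Ek t s"
proof -
  define \<delta> where "\<delta> = (1-c)/2"
  define M where "M = max t s"
  define N1 where "N1 = t^2 + 2*t* s + s^2"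
  define Nc where "Nc = t^2 - 2*c*t* s + s^2"
  have dpos: "\<delta> > 0" using c by (simp add: \<delta>_def)
  have Mpos: "M > 0" using t s by (simp add: M_def)
  have "Nc \<ge> \<delta> * (t^2+s^2)" unfolding Nc_def \<delta>_def using Nc_lower[of c t s] c t s by simp
  moreover have "\<delta> * (t^2+s^2) \<ge> \<delta> * M^2" using max_sq_le[OF t s] dpos by (simp add: M_def)
  ultimately have NcM: "Nc \<ge> \<delta> * M^2" by linarith
  have dM: "\<delta> * M^2 > 0" using dpos Mpos by simp
  have Ncpos: "Nc > 0" using NcM dM by linarith
  have diff: "N1 - Nc = 2*(1+c)*(t* s)" by (simp add: N1_def Nc_def algebra_simps)
  have NcN1: "Nc \<le> N1"
  proof -
    have "(2*(1+c))*(t* s) \<ge> 0" using c t s by simp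
    thus ?thesis using diff by linarith
  qed
  have K: "Kst c t s = N1 powr (-1/4) - Nc powr (-1/4)" by (simp add: Kst_def N1_def Nc_def)
  have le0: "N1 powr (-1/4) \<le> Nc powr (-1/4)" using Ncpos NcN1 by (intro powr_mono2') auto
  have "Nc powr (-(1/4)) - N1 powr (-(1/4)) \<le> (1/4) * (N1 - Nc) * Nc powr (-(1/4)-1)"
    using powr_conv_diff[OF Ncpos NcN1, of "1/4"] by simp
  hence A: "\<bar>Kst c t s\<bar> \<le> (1/4) * (N1 - Nc) * Nc powr (-5/4)" using K le0 by simp
  have B: "Nc powr (-5/4) \<le> (\<delta> * M^2) powr (-5/4)" using NcM dM by (intro powr_mono2') auto
  have C: "(\<delta> * M^2) powr (-5/4) = \<delta> powr (-5/4) * M powr (-5/2)"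
    using dpos Mpos by (simp add: powr_mult powr_sq_max)
  have cts: "c*(t * s) \<le> t * s"
  proof -
    have "0 \<le> (1-c)*(t * s)" using c t s by simp
    thus ?thesis by (simp add: algebra_simps)
  qed
  have D: "(1/4) * (N1 - Nc) \<le> t * s" using diff cts by (simp add: algebra_simps)
  have "(1/4) * (N1 - Nc) * Nc powr (-5/4) \<le> (t * s) * (\<delta> powr (-5/4) * M powr (-5/2))"
    by (rule mult_mono) (use B C D NcN1 t s in auto)
  hence "\<bar>Kst c t s\<bar> \<le> (t * s) * (\<delta> powr (-5/4) * M powr (-5/2))"
    using A by linarith
  thus ?thesis by (simp add: Ek_def M_def \<delta>_def algebra_simps)
qed

lemma dKst_bound:
  fixes c t s :: real
  assumes c: "-1 \<le> c" "c < 1" and t: "t > 0" and s: "s > 0"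
  shows "\<bar>dKst c t s\<bar> \<le> (1 + 5 * ((1-c)/2) powr (-9/4)) * s * (max t s) powr (-5/2)"
proof -
  define \<delta> where "\<delta> = (1-c)/2"
  define M where "M = max t s"
  define N1 where "N1 = t^2 + 2*t* s + s^2"
  define Nc where "Nc = t^2 - 2*c*t* s + s^2"
  define X where "X = M powr (-5/2)"
  define P where "P = Nc powr (-5/4)"
  define Q where "Q = N1 powr (-5/4)"
  have dpos: "\<delta> > 0" using c by (simp add: \<delta>_def)
  have Mpos: "M > 0" using t s by (simp add: M_def)
  have tM: "t \<le> M" "s \<le> M" by (auto simp: M_def)
  have "Nc \<ge> \<delta> * (t^2+s^2)" unfolding Nc_def \<delta>_def using Nc_lower[of c t s] c t s by simp
  moreover have "\<delta> * (t^2+s^2) \<ge> \<delta> * M^2" using max_sq_le[OF t s] dpos by (simp add: M_def)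
  ultimately have NcM: "Nc \<ge> \<delta> * M^2" by linarith
  have dM: "\<delta> * M^2 > 0" using dpos Mpos by simp
  have Ncpos: "Nc > 0" using NcM dM by linarith
  have diff: "N1 - Nc = 2*(1+c)*(t* s)" by (simp add: N1_def Nc_def algebra_simps)
  have NcN1: "Nc \<le> N1"
  proof -
    have "(2*(1+c))*(t* s) \<ge> 0" using c t s by simp
    thus ?thesis using diff by linarith
  qed
  have N1M: "M^2 \<le> N1" using t s by (auto simp: M_def N1_def max_def power2_eq_square)
  have Xpos: "X \<ge> 0" by (simp add: X_def)
  have dK: "dKst c t s = (1/2) * ((t - c* s) * (P - Q) - (1+c) * s * Q)"
    by (simp add: dKst_def P_def Q_def N1_def Nc_def algebra_simps)
  have PQ0: "Q \<le> P" unfolding P_def Q_def using Ncpos NcN1 by (intro powr_mono2') auto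
  have "Nc powr (-(5/4)) - N1 powr (-(5/4)) \<le> (5/4) * (N1 - Nc) * Nc powr (-(5/4)-1)"
    using powr_conv_diff[OF Ncpos NcN1, of "5/4"] by simp
  hence PQ1: "P - Q \<le> (5/4) * (N1 - Nc) * Nc powr (-9/4)" by (simp add: P_def Q_def)
  have B: "Nc powr (-9/4) \<le> (\<delta> * M^2) powr (-9/4)" using NcM dM by (intro powr_mono2') auto
  have C: "(\<delta> * M^2) powr (-9/4) = \<delta> powr (-9/4) * (X / M^2)"
  proof -
    have "(\<delta> * M^2) powr (-9/4) = \<delta> powr (-9/4) * M powr (-9/2)"
      using dpos Mpos by (simp add: powr_mult powr_sq_max)
    moreover have "M powr (-9/2) = X / M^2"
    proof -
      have "M powr (-9/2) * M powr 2 = M powr (-5/2)" by (simp add: powr_add[symmetric])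
      thus ?thesis using Mpos by (simp add: X_def powr_numeral field_simps)
    qed
    ultimately show ?thesis by simp
  qed
  have cts: "c*(t * s) \<le> t * s"
  proof -
    have "0 \<le> (1-c)*(t * s)" using c t s by simp
    thus ?thesis by (simp add: algebra_simps)
  qed
  have D: "(5/4) * (N1 - Nc) \<le> 5 * (t * s)" using diff cts by (simp add: algebra_simps)
  have dd: "\<delta> powr (-9/4) \<ge> 0" by simp
  have PQ2: "P - Q \<le> 5 * (t * s) * (\<delta> powr (-9/4) * (X / M^2))"
  proof -
    have "Nc powr (-9/4) \<ge> 0" by simp
    hence "(5/4) * (N1 - Nc) * Nc powr (-9/4) \<le> 5 * (t * s) * Nc powr (-9/4)"
      using D by (intro mult_right_mono) auto
    also have "\<dots> \<le> 5 * (t * s) * (\<delta> powr (-9/4) * (X / M^2))"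
      using B C t s by (intro mult_left_mono) auto
    finally show ?thesis using PQ1 by linarith
  qed
  have E1: "\<bar>t - c * s\<bar> \<le> 2 * M"
  proof -
    have c1: "\<bar>c\<bar> \<le> 1" using c by auto
    have "\<bar>c * s\<bar> = \<bar>c\<bar> * s" using s by (simp add: abs_mult)
    also have "\<dots> \<le> 1 * s" using c1 s by (intro mult_right_mono) auto
    finally have "\<bar>c * s\<bar> \<le> s" by simp
    moreover have "\<bar>t - c * s\<bar> \<le> \<bar>t\<bar> + \<bar>c * s\<bar>" by (rule abs_triangle_ineq4)
    ultimately show ?thesis using t tM by linarith
  qed
  have F1: "\<bar>t - c * s\<bar> * (P - Q) \<le> (2*M) * (5 * (t * s) * (\<delta> powr (-9/4) * (X / M^2)))"
    using E1 PQ0 PQ2 by (intro mult_mono) auto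
  have F2: "(2*M) * (5 * (t * s) * (\<delta> powr (-9/4) * (X / M^2))) = 10 * \<delta> powr (-9/4) * X * s * (t / M)"
    using Mpos by (simp add: field_simps power2_eq_square)
  have F3: "10 * \<delta> powr (-9/4) * X * s * (t / M) \<le> 10 * \<delta> powr (-9/4) * X * s * 1"
    using tM Mpos t s Xpos dd by (intro mult_left_mono) auto
  have G1: "Q \<le> X" unfolding Q_def X_def
  proof -
    have "N1 powr (-5/4) \<le> (M^2) powr (-5/4)" using N1M Mpos by (intro powr_mono2') auto
    thus "N1 powr (-5/4) \<le> M powr (-5/2)" using Mpos by (simp add: powr_sq_max)
  qed
  have Q0: "Q \<ge> 0" by (simp add: Q_def)
  have G2: "(1+c) * s * Q \<le> 2 * s * X" using c s G1 Q0 by (intro mult_mono) auto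
  have G3: "(1+c) * s * Q \<ge> 0" using c s Q0 by simp
  have "\<bar>dKst c t s\<bar> \<le> (1/2) * (\<bar>t - c * s\<bar> * (P - Q) + (1+c) * s * Q)"
  proof -
    have "\<bar>(t - c * s) * (P - Q) - (1+c) * s * Q\<bar> \<le> \<bar>(t - c * s) * (P - Q)\<bar> + \<bar>(1+c) * s * Q\<bar>"
      by (rule abs_triangle_ineq4)
    also have "\<bar>(t - c * s) * (P - Q)\<bar> = \<bar>t - c * s\<bar> * (P - Q)" using PQ0 by (simp add: abs_mult)
    also have "\<bar>(1+c) * s * Q\<bar> = (1+c) * s * Q" using G3 by simp
    finally show ?thesis unfolding dK by (simp add: abs_mult)
  qed
  also have "\<dots> \<le> (1/2) * (10 * \<delta> powr (-9/4) * X * s + 2 * s * X)"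
    using F1 F2 F3 G2 by simp
  also have "\<dots> = (1 + 5 * \<delta> powr (-9/4)) * s * X" by (simp add: algebra_simps)
  finally show ?thesis by (simp add: \<delta>_def X_def M_def)
qed

lemma Kst_deriv:
  fixes c t s :: real
  assumes c: "-1 \<le> c" "c < 1" and t: "t > 0" and s: "s > 0"
  shows "DERIV (\<lambda>t. Kst c t s) t :> dKst c t s"
proof -
  have Ncpos: "t^2 - 2*c*t* s + s^2 > 0"
  proof -
    have "t^2 - 2*c*t* s + s^2 \<ge> ((1-c)/2) * (t^2+s^2)" using Nc_lower[of c t s] c t s by simp
    moreover have "((1-c)/2) * (t^2+s^2) > 0" using c t by (intro mult_pos_pos) (auto intro: add_pos_nonneg)
    ultimately show ?thesis by linarith
  qed
  have N1pos: "t^2 + 2*t* s + s^2 > 0" using t s by (simp add: add_pos_pos)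
  have d1: "DERIV (\<lambda>t. t^2 + 2*t* s + s^2) t :> 2*t + 2* s"
    by (auto intro!: derivative_eq_intros)
  have d2: "DERIV (\<lambda>t. t^2 - 2*c*t* s + s^2) t :> 2*t - 2*c* s"
    by (auto intro!: derivative_eq_intros)
  note e1 = DERIV_fun_powr[OF d1 N1pos, of "-1/4"]
  note e2 = DERIV_fun_powr[OF d2 Ncpos, of "-1/4"]
  have "DERIV (\<lambda>t. Kst c t s) t :> (-1/4) * (t^2 + 2*t* s + s^2) powr (-1/4 - of_nat 1) * (2*t + 2* s)
        - (-1/4) * (t^2 - 2*c*t* s + s^2) powr (-1/4 - of_nat 1) * (2*t - 2*c* s)"
    unfolding Kst_def by (rule DERIV_diff[OF e1 e2])
  moreover have "(-1/4) * (t^2 + 2*t* s + s^2) powr (-1/4 - of_nat 1) * (2*t + 2* s)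
        - (-1/4) * (t^2 - 2*c*t* s + s^2) powr (-1/4 - of_nat 1) * (2*t - 2*c* s) = dKst c t s"
  proof -
    have ex: "(-1/4 - of_nat 1) = (-5/4::real)" by simp
    have gen: "\<And>A B::real. (-1/4) * A * (2*t + 2* s) - (-1/4) * B * (2*t - 2*c* s)
       = (1/2) * ((t - c* s) * B - (t + s) * A)" by (simp add: field_simps)
    show ?thesis unfolding ex dKst_def gen ..
  qed
  ultimately show ?thesis by simp
qed

lemma nn_int_pow_0:
  fixes a c :: real
  assumes "a > -1" "c \<ge> 0"
  shows "(\<integral>\<^sup>+ x. ennreal (indicator {0..c} x * x powr a) \<partial>lborel) = ennreal (c powr (a+1) / (a+1))"
  by (rule nn_integral_has_integral_lebesgue) (use has_integral_powr_from_0[OF assms] in auto)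

lemma nn_int_pow_inf:
  fixes e a :: real
  assumes "e < -1" "a > 0"
  shows "(\<integral>\<^sup>+ x. ennreal (indicator {a..} x * x powr e) \<partial>lborel) = ennreal (-(a powr (e+1)) / (e+1))"
  by (rule nn_integral_has_integral_lebesgue) (use has_integral_powr_to_inf[OF assms] in auto)

lemma Ek_nonneg: "t > 0 \<Longrightarrow> s > 0 \<Longrightarrow> Ek t s \<ge> 0"
  by (simp add: Ek_def)

lemma Ek_sym: "Ek t s = Ek s t"
  by (simp add: Ek_def max.commute mult.commute)

lemma Ek_measurable[measurable (raw)]:
  assumes [measurable]: "f \<in> borel_measurable M" "g \<in> borel_measurable M"
  shows "(\<lambda>x. Ek (f x) (g x)) \<in> borel_measurable M"
  unfolding Ek_def by measurable

lemma Ek_le: "t > 0 \<Longrightarrow> s > 0 \<Longrightarrow> s \<le> t \<Longrightarrow> Ek t s = t powr (-3/2) * s"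
  by (simp add: Ek_def max_def powr_mult_base mult.commute mult.left_commute)

lemma Ek_ge: "t > 0 \<Longrightarrow> s > 0 \<Longrightarrow> t \<le> s \<Longrightarrow> Ek t s = t * s powr (-3/2)"
  by (simp add: Ek_def max_def mult.assoc powr_mult_base)

lemma ennreal_mult_add:
  fixes a b c d :: real
  assumes "0 \<le> a" "0 \<le> b" "0 \<le> c" "0 \<le> d"
  shows "ennreal a * ennreal b + ennreal c * ennreal d = ennreal (a*b + c*d)"
  using assms by (simp add: ennreal_plus ennreal_mult)

lemma P1:
  assumes t: "t > 0"
  shows "(\<integral>\<^sup>+ s. ennreal (Ek t s) * indicator {0<..} s \<partial>lborel) \<le> ennreal (5/2 * t powr (1/2))"
proof -
  have "(\<integral>\<^sup>+ s. ennreal (Ek t s) * indicator {0<..} s \<partial>lborel)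
     \<le> (\<integral>\<^sup>+ s. ennreal (t powr (-3/2)) * ennreal (indicator {0..t} s * s powr 1)
              + ennreal t * ennreal (indicator {t..} s * s powr (-3/2)) \<partial>lborel)"
  proof (intro nn_integral_mono)
    fix s :: real
    show "ennreal (Ek t s) * indicator {0<..} s \<le> ennreal (t powr (-3/2)) * ennreal (indicator {0..t} s * s powr 1)
              + ennreal t * ennreal (indicator {t..} s * s powr (-3/2))"
    proof (cases "s > 0")
      case False thus ?thesis by simp
    next
      case True
      show ?thesis
      proof (cases "s \<le> t")
        case le: True
        have "ennreal (Ek t s) * indicator {0<..} s = ennreal (t powr (-3/2)) * ennreal (indicator {0..t} s * s powr 1)"
          using True le t by (simp add: Ek_le ennreal_mult)
        thus ?thesis by (simp add: add_increasing2)
      next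
        case gt: False
        have "ennreal (Ek t s) * indicator {0<..} s = ennreal t * ennreal (indicator {t..} s * s powr (-3/2))"
          using True gt t by (simp add: Ek_ge ennreal_mult)
        thus ?thesis by (simp add: add_increasing)
      qed
    qed
  qed
  also have "\<dots> = ennreal (t powr (-3/2)) * (\<integral>\<^sup>+ s. ennreal (indicator {0..t} s * s powr 1) \<partial>lborel)
              + ennreal t * (\<integral>\<^sup>+ s. ennreal (indicator {t..} s * s powr (-3/2)) \<partial>lborel)"
    by (subst nn_integral_add) (auto simp: nn_integral_cmult)
  also have "\<dots> = ennreal (t powr (-3/2)) * ennreal (t powr 2 / 2) + ennreal t * ennreal (2 * t powr (-1/2))"
  proof -
    have i1: "(\<integral>\<^sup>+ s. ennreal (indicator {0..t} s * s powr 1) \<partial>lborel) = ennreal (t powr 2 / 2)"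
      using nn_int_pow_0[of 1 t] t by simp
    have i2: "(\<integral>\<^sup>+ s. ennreal (indicator {t..} s * s powr (-3/2)) \<partial>lborel) = ennreal (2 * t powr (-1/2))"
      using nn_int_pow_inf[of "-3/2" t] t by simp
    show ?thesis by (simp only: i1 i2)
  qed
  also have "\<dots> = ennreal (t powr (-3/2) * (t powr 2 / 2) + t * (2 * t powr (-1/2)))"
    by (rule ennreal_mult_add) (use t in auto)
  also have "t powr (-3/2) * (t powr 2 / 2) + t * (2 * t powr (-1/2)) = 5/2 * t powr (1/2)"
  proof -
    have "t powr (-3/2) * t powr 2 = t powr (1/2)" by (simp add: powr_add[symmetric])
    moreover have "t * t powr (-1/2) = t powr (1/2)" using t by (simp add: powr_mult_base)
    ultimately show ?thesis by (simp add: algebra_simps)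
  qed
  finally show ?thesis .
qed

lemma P2:
  assumes s: "s > 0"
  shows "(\<integral>\<^sup>+ t. ennreal (Ek t s * t powr (-1/2)) * indicator {0<..} t \<partial>lborel) \<le> ennreal (5/3)"
proof -
  have "(\<integral>\<^sup>+ t. ennreal (Ek t s * t powr (-1/2)) * indicator {0<..} t \<partial>lborel)
     \<le> (\<integral>\<^sup>+ t. ennreal (s powr (-3/2)) * ennreal (indicator {0..s} t * t powr (1/2))
              + ennreal s * ennreal (indicator {s..} t * t powr (-2)) \<partial>lborel)"
  proof (intro nn_integral_mono)
    fix t :: real
    show "ennreal (Ek t s * t powr (-1/2)) * indicator {0<..} t \<le> ennreal (s powr (-3/2)) * ennreal (indicator {0..s} t * t powr (1/2))
              + ennreal s * ennreal (indicator {s..} t * t powr (-2))"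
    proof (cases "t > 0")
      case False thus ?thesis by simp
    next
      case True
      show ?thesis
      proof (cases "t \<le> s")
        case le: True
        have "Ek t s * t powr (-1/2) = s powr (-3/2) * (t * t powr (-1/2))"
          using True le s Ek_ge[of t s] by simp
        also have "t * t powr (-1/2) = t powr (1/2)" using True by (simp add: powr_mult_base)
        finally have "ennreal (Ek t s * t powr (-1/2)) * indicator {0<..} t = ennreal (s powr (-3/2)) * ennreal (indicator {0..s} t * t powr (1/2))"
          using True le s by (simp add: ennreal_mult)
        thus ?thesis by (simp add: add_increasing2)
      next
        case gt: False
        have "Ek t s * t powr (-1/2) = s * (t powr (-3/2) * t powr (-1/2))"
          using True gt s Ek_le[of t s] by simp
        also have "t powr (-3/2) * t powr (-1/2) = t powr (-2)" by (simp add: powr_add[symmetric])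
        finally have "ennreal (Ek t s * t powr (-1/2)) * indicator {0<..} t = ennreal s * ennreal (indicator {s..} t * t powr (-2))"
          using True gt s by (simp add: ennreal_mult)
        thus ?thesis by (simp add: add_increasing)
      qed
    qed
  qed
  also have "\<dots> = ennreal (s powr (-3/2)) * (\<integral>\<^sup>+ t. ennreal (indicator {0..s} t * t powr (1/2)) \<partial>lborel)
              + ennreal s * (\<integral>\<^sup>+ t. ennreal (indicator {s..} t * t powr (-2)) \<partial>lborel)"
    by (subst nn_integral_add) (auto simp: nn_integral_cmult)
  also have "\<dots> = ennreal (s powr (-3/2)) * ennreal (s powr (3/2) / (3/2)) + ennreal s * ennreal (s powr (-1))"
  proof -
    have i1: "(\<integral>\<^sup>+ t. ennreal (indicator {0..s} t * t powr (1/2)) \<partial>lborel) = ennreal (s powr (3/2) / (3/2))"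
      using nn_int_pow_0[of "1/2" s] s by simp
    have i2: "(\<integral>\<^sup>+ t. ennreal (indicator {s..} t * t powr (-2)) \<partial>lborel) = ennreal (s powr (-1))"
      using nn_int_pow_inf[of "-2" s] s by simp
    show ?thesis by (simp only: i1 i2)
  qed
  also have "\<dots> = ennreal (s powr (-3/2) * (s powr (3/2) / (3/2)) + s * s powr (-1))"
    by (rule ennreal_mult_add) (use s in auto)
  also have "s powr (-3/2) * (s powr (3/2) / (3/2)) + s * s powr (-1) = 5/3"
  proof -
    have "s powr (-3/2) * s powr (3/2) = 1" using s by (simp add: powr_add[symmetric])
    moreover have "s * s powr (-1) = 1" using s by (simp add: powr_minus)
    ultimately show ?thesis by (simp add: algebra_simps)
  qed
  finally show ?thesis by simp
qed

lemma Ek_le_sqrt: "t > 0 \<Longrightarrow> s > 0 \<Longrightarrow> Ek t s \<le> s powr (-1/2)"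
proof -
  assume t: "t > 0" and s: "s > 0"
  define M where "M = max t s"
  have M: "M > 0" "t \<le> M" "s \<le> M" using t s by (auto simp: M_def)
  have "Ek t s = t * s * M powr (-5/2)" by (simp add: Ek_def M_def)
  also have "\<dots> \<le> M * M * M powr (-5/2)" using M t s by (intro mult_right_mono mult_mono) auto
  also have "M * M * M powr (-5/2) = M powr (-1/2)"
    using M by (simp add: mult.assoc powr_mult_base)
  also have "M powr (-1/2) \<le> s powr (-1/2)" using M s by (intro powr_mono2') auto
  finally show ?thesis .
qed

lemma P3:
  assumes t: "t > 0" and R: "R > 0"
  shows "(\<integral>\<^sup>+ s. ennreal (Ek t s) * indicator {0<..R} s \<partial>lborel) \<le> ennreal (2 * R powr (1/2))"
proof -
  have "(\<integral>\<^sup>+ s. ennreal (Ek t s) * indicator {0<..R} s \<partial>lborel)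
      \<le> (\<integral>\<^sup>+ s. ennreal (indicator {0..R} s * s powr (-1/2)) \<partial>lborel)"
    using Ek_le_sqrt[OF t] by (intro nn_integral_mono) (auto simp: indicator_def)
  also have "\<dots> = ennreal (2 * R powr (1/2))" using R by (simp add: nn_int_pow_0)
  finally show ?thesis .
qed

definition CK :: "real \<Rightarrow> real" where
  "CK c = ((1-c)/2) powr (-5/4) + (1 + 5 * ((1-c)/2) powr (-9/4))"

lemma CK_pos: "CK c > 0"
proof -
  have "((1-c)/2) powr (-5/4) \<ge> 0" "((1-c)/2) powr (-9/4) \<ge> 0" by simp_all
  thus ?thesis unfolding CK_def by linarith
qed

lemma Kst_bound': "-1 \<le> c \<Longrightarrow> c < 1 \<Longrightarrow> t > 0 \<Longrightarrow> s > 0 \<Longrightarrow> \<bar>Kst c t s\<bar> \<le> CK c * Ek t s"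
proof -
  assume *: "-1 \<le> c" "c < 1" "t > 0" "s > 0"
  have "\<bar>Kst c t s\<bar> \<le> ((1-c)/2) powr (-5/4) * Ek t s" by (rule Kst_bound[OF *])
  also have "\<dots> \<le> CK c * Ek t s" using * Ek_nonneg[of t s]
    by (intro mult_right_mono) (auto simp: CK_def)
  finally show ?thesis .
qed

lemma Kst_diff:
  assumes c: "-1 \<le> c" "c < 1" and \<tau>: "0 < \<tau>" "\<tau> < t" and s: "s > 0"
  shows "\<bar>Kst c t s - Kst c \<tau> s\<bar> \<le> CK c * (t - \<tau>) / \<tau> * Ek \<tau> s"
proof -
  have "\<And>x. \<tau> \<le> x \<Longrightarrow> x \<le> t \<Longrightarrow> DERIV (\<lambda>x. Kst c x s) x :> dKst c x s"
    using Kst_deriv c s \<tau> by auto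
  from MVT2[OF \<tau>(2) this] obtain z where z: "\<tau> < z" "z < t"
    "Kst c t s - Kst c \<tau> s = (t - \<tau>) * dKst c z s" by blast
  have zpos: "z > 0" using z \<tau> by simp
  have "\<bar>dKst c z s\<bar> \<le> (1 + 5 * ((1-c)/2) powr (-9/4)) * s * (max z s) powr (-5/2)"
    by (rule dKst_bound[OF c zpos s])
  also have "\<dots> \<le> (1 + 5 * ((1-c)/2) powr (-9/4)) * s * (max \<tau> s) powr (-5/2)"
    using z \<tau> s by (intro mult_left_mono powr_mono2') auto
  also have "\<dots> \<le> CK c * s * (max \<tau> s) powr (-5/2)"
    using s by (intro mult_right_mono) (auto simp: CK_def)
  also have "CK c * s * (max \<tau> s) powr (-5/2) = CK c * Ek \<tau> s / \<tau>"
    using \<tau> by (simp add: Ek_def)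
  finally have "\<bar>dKst c z s\<bar> \<le> CK c * Ek \<tau> s / \<tau>" .
  hence "(t - \<tau>) * \<bar>dKst c z s\<bar> \<le> (t - \<tau>) * (CK c * Ek \<tau> s / \<tau>)"
    using z by (intro mult_left_mono) auto
  moreover have "CK c * (t - \<tau>) / \<tau> * Ek \<tau> s = (t - \<tau>) * (CK c * Ek \<tau> s / \<tau>)" by simp
  moreover have "\<bar>Kst c t s - Kst c \<tau> s\<bar> = (t - \<tau>) * \<bar>dKst c z s\<bar>" using z by (simp add: abs_mult)
  ultimately show ?thesis by linarith
qed

lemma Kst_isCont:
  assumes c: "-1 \<le> c" "c < 1" and t: "t > 0" and x: "x > 0"
  shows "isCont (\<lambda>s. Kst c t s) x"
proof -
  have Ncpos: "t^2 - 2*c*t* x + x^2 > 0"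
  proof -
    have "t^2 - 2*c*t* x + x^2 \<ge> ((1-c)/2) * (t^2+x^2)" using Nc_lower[of c t x] c t x by simp
    moreover have "((1-c)/2) * (t^2+x^2) > 0" using c t by (intro mult_pos_pos) (auto intro: add_pos_nonneg)
    ultimately show ?thesis by linarith
  qed
  have N1pos: "t^2 + 2*t* x + x^2 > 0" using t x by (simp add: add_pos_pos)
  show ?thesis unfolding Kst_def
    using Ncpos N1pos by (intro continuous_intros) auto
qed

definition vv :: "real \<Rightarrow> (real \<Rightarrow> real) \<Rightarrow> real \<Rightarrow> real" where
  "vv c W t = (LINT s:{0<..}|lborel. Kst c t s * W s)"

definition Phi :: "(real \<Rightarrow> real) \<Rightarrow> real \<Rightarrow> ennreal" where
  "Phi W t = (\<integral>\<^sup>+ s. ennreal (Ek t s * \<bar>W s\<bar>) * indicator {0<..} s \<partial>lborel)"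

lemma Phi_measurable:
  assumes [measurable]: "W \<in> borel_measurable borel"
  shows "Phi W \<in> borel_measurable borel"
  unfolding Phi_def by measurable

locale Wsetup =
  fixes c :: real and W :: "real \<Rightarrow> real" and a b :: real
  assumes c: "-1 \<le> c" "c < 1"
    and Wc: "continuous_on UNIV W"
    and a: "0 < a"
    and Wz: "\<And>s. s \<notin> {a..b} \<Longrightarrow> W s = 0"
begin

lemma W_meas[measurable]: "W \<in> borel_measurable borel"
  by (rule borel_measurable_continuous_onI[OF Wc])

lemma integrable_K:
  assumes t: "t > 0"
  shows "set_integrable lborel {0<..} (\<lambda>s. Kst c t s * W s)"
proof -
  have "integrable lborel (\<lambda>s. (Kst c t s * W s) * indicator {a..b} s)"
  proof (rule borel_integrable_atLeastAtMost)
    fix x assume "a \<le> x" "x \<le> b"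
    hence x: "x > 0" using a by simp
    show "isCont (\<lambda>s. Kst c t s * W s) x"
      using Kst_isCont[OF c t x] Wc by (intro continuous_intros) (auto simp: continuous_on_eq_continuous_at)
  qed
  moreover have "(\<lambda>s. (Kst c t s * W s) * indicator {a..b} s) = (\<lambda>s. indicator {0<..} s *\<^sub>R (Kst c t s * W s))"
  proof
    fix s show "(Kst c t s * W s) * indicator {a..b} s = indicator {0<..} s *\<^sub>R (Kst c t s * W s)"
      using Wz[of s] a by (cases "s \<in> {a..b}") (auto simp: indicator_def)
  qed
  ultimately show ?thesis unfolding set_integrable_def by simp
qed

lemma V2:
  assumes t: "t > 0"
  shows "ennreal \<bar>vv c W t\<bar> \<le> ennreal (CK c) * Phi W t"
proof -
  have "ennreal \<bar>vv c W t\<bar> = ennreal (norm (integral\<^sup>L lborel (\<lambda>s. indicator {0<..} s *\<^sub>R (Kst c t s * W s))))"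
    by (simp add: vv_def set_lebesgue_integral_def)
  also have "\<dots> \<le> (\<integral>\<^sup>+ s. norm (indicator {0<..} s *\<^sub>R (Kst c t s * W s)) \<partial>lborel)"
    using integrable_K[OF t] unfolding set_integrable_def by (rule integral_norm_bound_ennreal)
  also have "\<dots> \<le> (\<integral>\<^sup>+ s. ennreal (CK c) * (ennreal (Ek t s * \<bar>W s\<bar>) * indicator {0<..} s) \<partial>lborel)"
  proof (intro nn_integral_mono)
    fix s :: real
    show "ennreal (norm (indicator {0<..} s *\<^sub>R (Kst c t s * W s))) \<le> ennreal (CK c) * (ennreal (Ek t s * \<bar>W s\<bar>) * indicator {0<..} s)"
    proof (cases "s > 0")
      case False thus ?thesis by simp
    next
      case True
      have "\<bar>Kst c t s\<bar> * \<bar>W s\<bar> \<le> (CK c * Ek t s) * \<bar>W s\<bar>"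
        using Kst_bound'[OF c t True] by (rule mult_right_mono) simp
      hence "\<bar>Kst c t s * W s\<bar> \<le> CK c * (Ek t s * \<bar>W s\<bar>)"
        by (simp add: abs_mult mult.assoc)
      moreover have "ennreal (CK c) * ennreal (Ek t s * \<bar>W s\<bar>) = ennreal (CK c * (Ek t s * \<bar>W s\<bar>))"
        using CK_pos[of c] Ek_nonneg[OF t True] by (intro ennreal_mult[symmetric]) auto
      ultimately show ?thesis using True by (simp add: ennreal_leI)
    qed
  qed
  also have "\<dots> = ennreal (CK c) * Phi W t"
    unfolding Phi_def by (rule nn_integral_cmult) measurable
  finally show ?thesis .
qed

lemma V3:
  assumes \<tau>: "0 < \<tau>" "\<tau> < t"
  shows "ennreal \<bar>vv c W t - vv c W \<tau>\<bar> \<le> ennreal (CK c * (t - \<tau>) / \<tau>) * Phi W \<tau>"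
proof -
  have t: "t > 0" using \<tau> by simp
  have "vv c W t - vv c W \<tau> = (LINT s:{0<..}|lborel. Kst c t s * W s - Kst c \<tau> s * W s)"
    unfolding vv_def by (rule set_integral_diff(2)[symmetric, OF integrable_K[OF t] integrable_K[OF \<tau>(1)]])
  also have "\<dots> = integral\<^sup>L lborel (\<lambda>s. indicator {0<..} s *\<^sub>R ((Kst c t s - Kst c \<tau> s) * W s))"
    by (simp add: set_lebesgue_integral_def algebra_simps)
  finally have eq: "vv c W t - vv c W \<tau> = integral\<^sup>L lborel (\<lambda>s. indicator {0<..} s *\<^sub>R ((Kst c t s - Kst c \<tau> s) * W s))" .
  have int: "integrable lborel (\<lambda>s. indicator {0<..} s *\<^sub>R ((Kst c t s - Kst c \<tau> s) * W s))"
  proof -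
    have "set_integrable lborel {0<..} (\<lambda>s. Kst c t s * W s - Kst c \<tau> s * W s)"
      by (rule set_integral_diff(1)[OF integrable_K[OF t] integrable_K[OF \<tau>(1)]])
    thus ?thesis unfolding set_integrable_def by (simp add: algebra_simps)
  qed
  have "ennreal \<bar>vv c W t - vv c W \<tau>\<bar> \<le> (\<integral>\<^sup>+ s. norm (indicator {0<..} s *\<^sub>R ((Kst c t s - Kst c \<tau> s) * W s)) \<partial>lborel)"
    unfolding eq using integral_norm_bound_ennreal[OF int] by simp
  also have "\<dots> \<le> (\<integral>\<^sup>+ s. ennreal (CK c * (t - \<tau>) / \<tau>) * (ennreal (Ek \<tau> s * \<bar>W s\<bar>) * indicator {0<..} s) \<partial>lborel)"
  proof (intro nn_integral_mono)
    fix s :: real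
    show "ennreal (norm (indicator {0<..} s *\<^sub>R ((Kst c t s - Kst c \<tau> s) * W s))) \<le> ennreal (CK c * (t - \<tau>) / \<tau>) * (ennreal (Ek \<tau> s * \<bar>W s\<bar>) * indicator {0<..} s)"
    proof (cases "s > 0")
      case False thus ?thesis by simp
    next
      case True
      have "\<bar>Kst c t s - Kst c \<tau> s\<bar> * \<bar>W s\<bar> \<le> (CK c * (t - \<tau>) / \<tau> * Ek \<tau> s) * \<bar>W s\<bar>"
        using Kst_diff[OF c \<tau> True] by (rule mult_right_mono) simp
      hence "\<bar>(Kst c t s - Kst c \<tau> s) * W s\<bar> \<le> (CK c * (t - \<tau>) / \<tau>) * (Ek \<tau> s * \<bar>W s\<bar>)"
        by (simp add: abs_mult mult.assoc)
      moreover have "CK c * (t - \<tau>) / \<tau> \<ge> 0" using CK_pos[of c] \<tau> by simp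
      moreover have "ennreal (CK c * (t - \<tau>) / \<tau>) * ennreal (Ek \<tau> s * \<bar>W s\<bar>) = ennreal ((CK c * (t - \<tau>) / \<tau>) * (Ek \<tau> s * \<bar>W s\<bar>))"
        using CK_pos[of c] \<tau> Ek_nonneg[OF \<tau>(1) True] by (intro ennreal_mult[symmetric]) auto
      ultimately show ?thesis using True by (simp add: ennreal_leI)
    qed
  qed
  also have "\<dots> = ennreal (CK c * (t - \<tau>) / \<tau>) * Phi W \<tau>"
    unfolding Phi_def by (rule nn_integral_cmult) measurable
  finally show ?thesis .
qed

end

lemma ennreal_sqrt_mult:
  fixes x y :: real assumes "x \<ge> 0"
  shows "ennreal (sqrt x) * ennreal (sqrt x * \<bar>y\<bar>) = ennreal (x * \<bar>y\<bar>)"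
  using assms by (simp add: ennreal_mult[symmetric] mult.assoc[symmetric])

lemma ennreal_ind_sq: "(s \<in> A \<Longrightarrow> x \<ge> 0) \<Longrightarrow> (ennreal x * indicator A s)^2 = ennreal (x^2) * (indicator A s :: ennreal)"
  by (cases "s \<in> A") (auto simp: power2_eq_square ennreal_mult)

context Wsetup
begin

definition IW :: ennreal where
  "IW = (\<integral>\<^sup>+ s. ennreal ((W s)^2) * indicator {0<..} s \<partial>lborel)"

lemma Phi_CS:
  assumes t: "t > 0" and A: "A \<in> sets borel" and AW: "\<And>s. s > 0 \<Longrightarrow> W s \<noteq> 0 \<Longrightarrow> s \<in> A"
  shows "(Phi W t)^2 \<le> (\<integral>\<^sup>+ s. ennreal (Ek t s) * indicator (A \<inter> {0<..}) s \<partial>lborel)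
                      * (\<integral>\<^sup>+ s. ennreal (Ek t s * (W s)^2) * indicator {0<..} s \<partial>lborel)"
proof -
  define f where "f s = ennreal (sqrt (Ek t s)) * indicator (A \<inter> {0<..}) s" for s
  define g where "g s = ennreal (sqrt (Ek t s) * \<bar>W s\<bar>) * indicator {0<..} s" for s
  have [measurable]: "A \<in> sets lborel" using A by simp
  have fm: "f \<in> borel_measurable lborel" unfolding f_def by measurable
  have gm: "g \<in> borel_measurable lborel" unfolding g_def by measurable
  have e1: "Phi W t = (\<integral>\<^sup>+ s. f s * g s \<partial>lborel)"
    unfolding Phi_def
  proof (intro nn_integral_cong)
    fix s :: real
    show "ennreal (Ek t s * \<bar>W s\<bar>) * indicator {0<..} s = f s * g s"
    proof (cases "s > 0")
      case False thus ?thesis by (simp add: f_def g_def)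
    next
      case True
      show ?thesis
      proof (cases "s \<in> A")
        case True': True
        thus ?thesis using True Ek_nonneg[OF t True] by (simp add: f_def g_def ennreal_sqrt_mult)
      next
        case False
        hence "W s = 0" using AW True by blast
        thus ?thesis using True False by (simp add: f_def g_def)
      qed
    qed
  qed
  have e2: "(\<integral>\<^sup>+ s. (f s)^2 \<partial>lborel) = (\<integral>\<^sup>+ s. ennreal (Ek t s) * indicator (A \<inter> {0<..}) s \<partial>lborel)"
  proof (intro nn_integral_cong)
    fix s :: real
    show "(f s)^2 = ennreal (Ek t s) * indicator (A \<inter> {0<..}) s"
      unfolding f_def by (subst ennreal_ind_sq) (use Ek_nonneg[OF t, of s] in \<open>auto simp: indicator_def\<close>)
  qed
  have e3: "(\<integral>\<^sup>+ s. (g s)^2 \<partial>lborel) = (\<integral>\<^sup>+ s. ennreal (Ek t s * (W s)^2) * indicator {0<..} s \<partial>lborel)"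
  proof (intro nn_integral_cong)
    fix s :: real
    show "(g s)^2 = ennreal (Ek t s * (W s)^2) * indicator {0<..} s"
      unfolding g_def by (subst ennreal_ind_sq) (use Ek_nonneg[OF t, of s] in \<open>auto simp: indicator_def power_mult_distrib\<close>)
  qed
  show ?thesis using Cauchy_Schwarz_nn_integral[OF fm gm] unfolding e1 e2 e3 .
qed

end
context Wsetup
begin
lemma H_bound:
  "(\<integral>\<^sup>+ t. (Phi W t)^2 * ennreal (1/t) * indicator {0<..} t \<partial>lborel) \<le> ennreal (25/6) * IW"
proof -
  define F where "F t s = ennreal (Ek t s * t powr (-1/2)) * indicator {0<..} t * (ennreal ((W s)^2) * indicator {0<..} s)" for t s
  have Fm[measurable]: "(\<lambda>(t, s). F t s) \<in> borel_measurable (lborel \<Otimes>\<^sub>M lborel)"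
    unfolding F_def by measurable
  have step1: "(Phi W t)^2 * ennreal (1/t) * indicator {0<..} t \<le> ennreal (5/2) * (\<integral>\<^sup>+ s. F t s \<partial>lborel)" for t
  proof (cases "t > 0")
    case False thus ?thesis by simp
  next
    case t: True
    define J where "J = (\<integral>\<^sup>+ s. ennreal (Ek t s * (W s)^2) * indicator {0<..} s \<partial>lborel)"
    have "(Phi W t)^2 \<le> (\<integral>\<^sup>+ s. ennreal (Ek t s) * indicator (UNIV \<inter> {0<..}) s \<partial>lborel) * J"
      unfolding J_def by (rule Phi_CS[OF t]) auto
    also have "\<dots> \<le> ennreal (5/2 * t powr (1/2)) * J"
      using P1[OF t] by (intro mult_right_mono) auto
    finally have a1: "(Phi W t)^2 * ennreal (1/t) \<le> ennreal (5/2 * t powr (1/2)) * J * ennreal (1/t)"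
      by (rule mult_right_mono) simp
    have a2: "ennreal (5/2 * t powr (1/2)) * J * ennreal (1/t) = ennreal (5/2) * (ennreal (t powr (-1/2)) * J)"
    proof -
      have eq: "t * t powr (-1/2) = t powr (1/2)" using t by (simp add: powr_mult_base)
      have "t powr (1/2) * (1/t) = (t * t powr (-1/2)) * (1/t)" by (simp only: eq)
      also have "\<dots> = t powr (-1/2)" using t by simp
      finally have "t powr (1/2) * (1/t) = t powr (-1/2)" .
      hence "ennreal (5/2 * t powr (1/2)) * ennreal (1/t) = ennreal (5/2) * ennreal (t powr (-1/2))"
        using t by (simp add: ennreal_mult[symmetric] mult.assoc)
      thus ?thesis by (simp add: ac_simps)
    qed
    have a3: "ennreal (t powr (-1/2)) * J = (\<integral>\<^sup>+ s. F t s \<partial>lborel)"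
      unfolding J_def
    proof (subst nn_integral_cmult[symmetric])
      show "(\<lambda>s. ennreal (Ek t s * (W s)\<^sup>2) * indicator {0<..} s) \<in> borel_measurable lborel" by measurable
      show "(\<integral>\<^sup>+ s. ennreal (t powr (-1/2)) * (ennreal (Ek t s * (W s)\<^sup>2) * indicator {0<..} s) \<partial>lborel) = integral\<^sup>N lborel (F t)"
      proof (intro nn_integral_cong)
        fix s :: real
        show "ennreal (t powr (-1/2)) * (ennreal (Ek t s * (W s)\<^sup>2) * indicator {0<..} s) = F t s"
          using t Ek_nonneg[OF t, of s] unfolding F_def
          by (cases "s > 0") (auto simp: ennreal_mult[symmetric] ac_simps)
      qed
    qed
    show ?thesis using a1 a2 a3 t by simp
  qed
  have "(\<integral>\<^sup>+ t. (Phi W t)^2 * ennreal (1/t) * indicator {0<..} t \<partial>lborel)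
      \<le> (\<integral>\<^sup>+ t. ennreal (5/2) * (\<integral>\<^sup>+ s. F t s \<partial>lborel) \<partial>lborel)"
    by (intro nn_integral_mono step1)
  also have "\<dots> = ennreal (5/2) * (\<integral>\<^sup>+ t. \<integral>\<^sup>+ s. F t s \<partial>lborel \<partial>lborel)"
    by (rule nn_integral_cmult) measurable
  also have "(\<integral>\<^sup>+ t. \<integral>\<^sup>+ s. F t s \<partial>lborel \<partial>lborel) = (\<integral>\<^sup>+ s. \<integral>\<^sup>+ t. F t s \<partial>lborel \<partial>lborel)"
    by (rule lborel_pair.Fubini'[symmetric]) simp
  also have "\<dots> \<le> (\<integral>\<^sup>+ s. ennreal (5/3) * (ennreal ((W s)^2) * indicator {0<..} s) \<partial>lborel)"
  proof (intro nn_integral_mono)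
    fix s :: real
    have "(\<integral>\<^sup>+ t. F t s \<partial>lborel) = (\<integral>\<^sup>+ t. ennreal (Ek t s * t powr (-1/2)) * indicator {0<..} t \<partial>lborel) * (ennreal ((W s)^2) * indicator {0<..} s)"
      unfolding F_def by (rule nn_integral_multc) measurable
    also have "\<dots> \<le> ennreal (5/3) * (ennreal ((W s)^2) * indicator {0<..} s)"
    proof (cases "s > 0")
      case True thus ?thesis using P2[OF True] by (intro mult_right_mono) auto
    qed simp
    finally show "(\<integral>\<^sup>+ t. F t s \<partial>lborel) \<le> ennreal (5/3) * (ennreal ((W s)^2) * indicator {0<..} s)" .
  qed
  also have "\<dots> = ennreal (5/3) * IW"
    unfolding IW_def by (rule nn_integral_cmult) measurable
  finally have "(\<integral>\<^sup>+ t. (Phi W t)^2 * ennreal (1/t) * indicator {0<..} t \<partial>lborel) \<le> ennreal (5/2) * (ennreal (5/3) * IW)"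
    by (simp add: mult_left_mono)
  also have "\<dots> = ennreal (25/6) * IW"
    by (simp add: mult.assoc[symmetric] ennreal_mult[symmetric])
  finally show ?thesis .
qed

end
context Wsetup
begin

lemma L_bound:
  assumes R: "R > 0" and WR: "\<And>s. s > R \<Longrightarrow> W s = 0"
  shows "(\<integral>\<^sup>+ t. (Phi W t)^2 * indicator {0<..} t \<partial>lborel) \<le> ennreal (5*R) * IW"
proof -
  define F where "F t s = ennreal (Ek t s) * indicator {0<..} t * (ennreal ((W s)^2) * indicator {0<..} s)" for t s
  have Fm[measurable]: "(\<lambda>(t, s). F t s) \<in> borel_measurable (lborel \<Otimes>\<^sub>M lborel)"
    unfolding F_def by measurable
  have step1: "(Phi W t)^2 * indicator {0<..} t \<le> ennreal (2 * R powr (1/2)) * (\<integral>\<^sup>+ s. F t s \<partial>lborel)" for t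
  proof (cases "t > 0")
    case False thus ?thesis by simp
  next
    case t: True
    define J where "J = (\<integral>\<^sup>+ s. ennreal (Ek t s * (W s)^2) * indicator {0<..} s \<partial>lborel)"
    have "(Phi W t)^2 \<le> (\<integral>\<^sup>+ s. ennreal (Ek t s) * indicator ({..R} \<inter> {0<..}) s \<partial>lborel) * J"
      unfolding J_def by (rule Phi_CS[OF t]) (use WR in \<open>auto simp: not_le[symmetric]\<close>)
    also have "{..R} \<inter> {0<..} = {0<..R}" by auto
    also have "(\<integral>\<^sup>+ s. ennreal (Ek t s) * indicator {0<..R} s \<partial>lborel) * J \<le> ennreal (2 * R powr (1/2)) * J"
      using P3[OF t R] by (intro mult_right_mono) auto
    finally have a1: "(Phi W t)^2 \<le> ennreal (2 * R powr (1/2)) * J" .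
    have a3: "J = (\<integral>\<^sup>+ s. F t s \<partial>lborel)"
      unfolding J_def
    proof (intro nn_integral_cong)
      fix s :: real
      show "ennreal (Ek t s * (W s)\<^sup>2) * indicator {0<..} s = F t s"
        using t Ek_nonneg[OF t, of s] unfolding F_def
        by (cases "s > 0") (auto simp: ennreal_mult[symmetric] ac_simps)
    qed
    show ?thesis using a1 a3 t by simp
  qed
  have "(\<integral>\<^sup>+ t. (Phi W t)^2 * indicator {0<..} t \<partial>lborel)
      \<le> (\<integral>\<^sup>+ t. ennreal (2 * R powr (1/2)) * (\<integral>\<^sup>+ s. F t s \<partial>lborel) \<partial>lborel)"
    by (intro nn_integral_mono step1)
  also have "\<dots> = ennreal (2 * R powr (1/2)) * (\<integral>\<^sup>+ t. \<integral>\<^sup>+ s. F t s \<partial>lborel \<partial>lborel)"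
    by (rule nn_integral_cmult) measurable
  also have "(\<integral>\<^sup>+ t. \<integral>\<^sup>+ s. F t s \<partial>lborel \<partial>lborel) = (\<integral>\<^sup>+ s. \<integral>\<^sup>+ t. F t s \<partial>lborel \<partial>lborel)"
    by (rule lborel_pair.Fubini'[symmetric]) simp
  also have "\<dots> \<le> (\<integral>\<^sup>+ s. ennreal (5/2 * R powr (1/2)) * (ennreal ((W s)^2) * indicator {0<..} s) \<partial>lborel)"
  proof (intro nn_integral_mono)
    fix s :: real
    have "(\<integral>\<^sup>+ t. F t s \<partial>lborel) = (\<integral>\<^sup>+ t. ennreal (Ek t s) * indicator {0<..} t \<partial>lborel) * (ennreal ((W s)^2) * indicator {0<..} s)"
      unfolding F_def by (rule nn_integral_multc) measurable
    also have "\<dots> \<le> ennreal (5/2 * R powr (1/2)) * (ennreal ((W s)^2) * indicator {0<..} s)"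
    proof (cases "s > 0 \<and> W s \<noteq> 0")
      case True
      hence s: "s > 0" and sR: "s \<le> R" using WR not_le by blast+
      have "(\<integral>\<^sup>+ t. ennreal (Ek t s) * indicator {0<..} t \<partial>lborel) = (\<integral>\<^sup>+ t. ennreal (Ek s t) * indicator {0<..} t \<partial>lborel)"
        by (simp add: Ek_sym)
      also have "\<dots> \<le> ennreal (5/2 * s powr (1/2))" by (rule P1[OF s])
      also have "\<dots> \<le> ennreal (5/2 * R powr (1/2))"
        using s sR by (intro ennreal_leI mult_left_mono powr_mono2) auto
      finally show ?thesis by (intro mult_right_mono) auto
    next
      case False thus ?thesis by auto
    qed
    finally show "(\<integral>\<^sup>+ t. F t s \<partial>lborel) \<le> ennreal (5/2 * R powr (1/2)) * (ennreal ((W s)^2) * indicator {0<..} s)" .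
  qed
  also have "\<dots> = ennreal (5/2 * R powr (1/2)) * IW"
    unfolding IW_def by (rule nn_integral_cmult) measurable
  finally have "(\<integral>\<^sup>+ t. (Phi W t)^2 * indicator {0<..} t \<partial>lborel) \<le> ennreal (2 * R powr (1/2)) * (ennreal (5/2 * R powr (1/2)) * IW)"
    by (simp add: mult_left_mono)
  also have "\<dots> = ennreal (5*R) * IW"
  proof -
    have "R powr (1/2) * R powr (1/2) = R" using R by (simp add: powr_add[symmetric])
    hence "(2 * R powr (1/2)) * (5/2 * R powr (1/2)) = 5*R" by (simp add: algebra_simps)
    thus ?thesis by (simp add: mult.assoc[symmetric] ennreal_mult[symmetric])
  qed
  finally show ?thesis .
qed

end
context Wsetup
begin

definition hfun :: "real \<Rightarrow> real \<Rightarrow> ennreal" where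
  "hfun t \<tau> = ennreal ((CK c)^2) *
     (indicator {0<..} \<tau> * indicator {\<tau><..2*\<tau>} t * (Phi W \<tau>)^2 * ennreal (1/\<tau>^2)
      + 8 * (indicator {0<..<t/2} \<tau> * (Phi W t)^2 * ennreal (1/t^2))
      + 8 * (indicator {0<..} \<tau> * indicator {2*\<tau>..} t * (Phi W \<tau>)^2 * ennreal (1/t^2)))"

lemma sq_diff_le: "((x::real) - y)^2 \<le> 2 * x^2 + 2 * y^2"
proof -
  have "2 * x^2 + 2 * y^2 - (x - y)^2 = (x + y)^2" by (simp add: power2_eq_square algebra_simps)
  moreover have "(x + y)^2 \<ge> 0" by simp
  ultimately show ?thesis by linarith
qed

lemma ennreal_sq_mult: "y \<ge> 0 \<Longrightarrow> ennreal (x^2 * y) = (ennreal \<bar>x\<bar>)^2 * ennreal y"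
proof -
  assume y: "y \<ge> 0"
  have "(ennreal \<bar>x\<bar>)^2 = ennreal (\<bar>x\<bar>^2)" by (rule ennreal_power) simp
  thus ?thesis using y by (simp add: ennreal_mult)
qed

lemma G1:
  assumes \<tau>: "0 < \<tau>" "\<tau> < t"
  shows "ennreal ((vv c W t - vv c W \<tau>)^2 / (t - \<tau>)^2) \<le> hfun t \<tau>"
proof -
  have t: "t > 0" using \<tau> by simp
  define d where "d = vv c W t - vv c W \<tau>"
  have split: "ennreal (d^2 / (t - \<tau>)^2) = (ennreal \<bar>d\<bar>)^2 * ennreal (1/(t-\<tau>)^2)"
    using ennreal_sq_mult[of "1/(t-\<tau>)^2" d] by simp
  show ?thesis
  proof (cases "t \<le> 2*\<tau>")
    case True
    define K where "K = CK c * (t - \<tau>) / \<tau>"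
    have K0: "K \<ge> 0" using CK_pos[of c] \<tau> by (simp add: K_def)
    have "ennreal \<bar>d\<bar> \<le> ennreal K * Phi W \<tau>" unfolding d_def K_def by (rule V3[OF \<tau>])
    hence "(ennreal \<bar>d\<bar>)^2 \<le> (ennreal K * Phi W \<tau>)^2" by (rule power_mono) simp
    hence "(ennreal \<bar>d\<bar>)^2 * ennreal (1/(t-\<tau>)^2) \<le> (ennreal K * Phi W \<tau>)^2 * ennreal (1/(t-\<tau>)^2)"
      by (rule mult_right_mono) simp
    also have "(ennreal K * Phi W \<tau>)^2 * ennreal (1/(t-\<tau>)^2) = (ennreal K)^2 * ennreal (1/(t-\<tau>)^2) * (Phi W \<tau>)^2"
      by (simp add: power_mult_distrib ac_simps)
    also have "(ennreal K)^2 = ennreal (K^2)" using K0 by (rule ennreal_power)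
    also have "ennreal (K^2) * ennreal (1/(t-\<tau>)^2) = ennreal (K^2 * (1/(t-\<tau>)^2))"
      by (rule ennreal_mult[symmetric]) auto
    also have "K^2 * (1/(t-\<tau>)^2) = (CK c)^2 * (1/\<tau>^2)"
      using \<tau> by (simp add: K_def power_mult_distrib power_divide)
    also have "ennreal ((CK c)^2 * (1/\<tau>^2)) * (Phi W \<tau>)^2
        = ennreal ((CK c)^2) * (indicator {0<..} \<tau> * indicator {\<tau><..2*\<tau>} t * (Phi W \<tau>)^2 * ennreal (1/\<tau>^2))"
    proof -
      have e: "ennreal ((CK c)^2 * (1/\<tau>^2)) = ennreal ((CK c)^2) * ennreal (1/\<tau>^2)"
        by (rule ennreal_mult) auto
      show ?thesis unfolding e using \<tau> True by (simp add: ac_simps)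
    qed
    also have "\<dots> \<le> hfun t \<tau>"
      unfolding hfun_def by (intro mult_left_mono add_increasing2 add_increasing) (auto simp del: ennreal_eq_0_iff)
    finally show ?thesis using split by (simp add: d_def)
  next
    case False
    have real_ineq: "d^2 / (t - \<tau>)^2 \<le> 8 * (vv c W t)^2 * (1/t^2) + 8 * (vv c W \<tau>)^2 * (1/t^2)"
    proof -
      have a: "d^2 \<le> 2 * (vv c W t)^2 + 2 * (vv c W \<tau>)^2"
        unfolding d_def by (rule sq_diff_le)
      have "t/2 \<le> t - \<tau>" using False by simp
      hence "(t/2)^2 \<le> (t - \<tau>)^2" using t by (intro power_mono) auto
      moreover have "0 < (t - \<tau>)^2 * (t/2)^2" using \<tau> by simp
      ultimately have "1/(t - \<tau>)^2 \<le> 1/(t/2)^2" by (intro divide_left_mono) auto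
      moreover have "1/(t/2)^2 = 4 * (1/t^2)" by (simp add: power_divide)
      ultimately have b: "1/(t - \<tau>)^2 \<le> 4 * (1/t^2)" by simp
      have "d^2 / (t - \<tau>)^2 = d^2 * (1/(t - \<tau>)^2)" by simp
      also have "\<dots> \<le> (2 * (vv c W t)^2 + 2 * (vv c W \<tau>)^2) * (4 * (1/t^2))"
        using a b by (intro mult_mono) auto
      also have "\<dots> = 8 * (vv c W t)^2 * (1/t^2) + 8 * (vv c W \<tau>)^2 * (1/t^2)" by (simp add: algebra_simps)
      finally show ?thesis .
    qed
    have v2t: "(ennreal \<bar>vv c W t\<bar>)^2 \<le> (ennreal (CK c) * Phi W t)^2"
      by (rule power_mono[OF V2[OF t]]) simp
    have v2\<tau>: "(ennreal \<bar>vv c W \<tau>\<bar>)^2 \<le> (ennreal (CK c) * Phi W \<tau>)^2"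
      by (rule power_mono[OF V2[OF \<tau>(1)]]) simp
    have "ennreal (d^2 / (t - \<tau>)^2) \<le> ennreal (8 * (vv c W t)^2 * (1/t^2) + 8 * (vv c W \<tau>)^2 * (1/t^2))"
      by (rule ennreal_leI[OF real_ineq])
    also have "\<dots> = 8 * ((ennreal \<bar>vv c W t\<bar>)^2 * ennreal (1/t^2)) + 8 * ((ennreal \<bar>vv c W \<tau>\<bar>)^2 * ennreal (1/t^2))"
    proof -
      have e8: "\<And>z. z \<ge> 0 \<Longrightarrow> ennreal (8 * z) = 8 * ennreal z" by (subst ennreal_mult) auto
      have "ennreal (8 * (vv c W t)^2 * (1/t^2)) = ennreal (8 * ((vv c W t)^2 * (1/t^2)))" by (simp only: mult.assoc)
      also have "\<dots> = 8 * ennreal ((vv c W t)^2 * (1/t^2))" by (rule e8) simp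
      also have "ennreal ((vv c W t)^2 * (1/t^2)) = (ennreal \<bar>vv c W t\<bar>)^2 * ennreal (1/t^2)"
        by (rule ennreal_sq_mult) simp
      finally have A1: "ennreal (8 * (vv c W t)^2 * (1/t^2)) = 8 * ((ennreal \<bar>vv c W t\<bar>)^2 * ennreal (1/t^2))" .
      have "ennreal (8 * (vv c W \<tau>)^2 * (1/t^2)) = ennreal (8 * ((vv c W \<tau>)^2 * (1/t^2)))" by (simp only: mult.assoc)
      also have "\<dots> = 8 * ennreal ((vv c W \<tau>)^2 * (1/t^2))" by (rule e8) simp
      also have "ennreal ((vv c W \<tau>)^2 * (1/t^2)) = (ennreal \<bar>vv c W \<tau>\<bar>)^2 * ennreal (1/t^2)"
        by (rule ennreal_sq_mult) simp
      finally have A2: "ennreal (8 * (vv c W \<tau>)^2 * (1/t^2)) = 8 * ((ennreal \<bar>vv c W \<tau>\<bar>)^2 * ennreal (1/t^2))" .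
      note A1 A2
      have "ennreal (8 * (vv c W t)^2 * (1/t^2) + 8 * (vv c W \<tau>)^2 * (1/t^2))
          = ennreal (8 * (vv c W t)^2 * (1/t^2)) + ennreal (8 * (vv c W \<tau>)^2 * (1/t^2))"
        by (rule ennreal_plus) auto
      thus ?thesis unfolding A1 A2 .
    qed
    also have "\<dots> \<le> 8 * ((ennreal (CK c) * Phi W t)^2 * ennreal (1/t^2)) + 8 * ((ennreal (CK c) * Phi W \<tau>)^2 * ennreal (1/t^2))"
      using v2t v2\<tau> by (intro add_mono mult_left_mono mult_right_mono) auto
    also have "\<dots> = ennreal ((CK c)^2) * (8 * (indicator {0<..<t/2} \<tau> * (Phi W t)^2 * ennreal (1/t^2)))
                  + ennreal ((CK c)^2) * (8 * (indicator {0<..} \<tau> * indicator {2*\<tau>..} t * (Phi W \<tau>)^2 * ennreal (1/t^2)))"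
      using False \<tau> CK_pos[of c] by (simp add: power_mult_distrib ennreal_power ac_simps)
    also have "\<dots> \<le> hfun t \<tau>"
      unfolding hfun_def distrib_left add.assoc by (rule add_increasing) auto
    finally show ?thesis by (simp add: d_def)
  qed
qed

end
context Wsetup
begin

lemma Phi_meas[measurable]: "Phi W \<in> borel_measurable borel"
  by (rule Phi_measurable[OF W_meas])

definition HH :: ennreal where
  "HH = (\<integral>\<^sup>+ t. (Phi W t)^2 * ennreal (1/t) * indicator {0<..} t \<partial>lborel)"

definition T1 :: "real \<Rightarrow> real \<Rightarrow> ennreal" where
  "T1 t \<tau> = indicator {0<..} \<tau> * indicator {\<tau><..2*\<tau>} t * (Phi W \<tau>)^2 * ennreal (1/\<tau>^2)"
definition T2 :: "real \<Rightarrow> real \<Rightarrow> ennreal" where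
  "T2 t \<tau> = indicator {0<..<t/2} \<tau> * (Phi W t)^2 * ennreal (1/t^2)"
definition T3 :: "real \<Rightarrow> real \<Rightarrow> ennreal" where
  "T3 t \<tau> = indicator {0<..} \<tau> * indicator {2*\<tau>..} t * (Phi W \<tau>)^2 * ennreal (1/t^2)"

lemma T1_meas[measurable]: "(\<lambda>p. T1 (fst p) (snd p)) \<in> borel_measurable (lborel \<Otimes>\<^sub>M lborel)"
proof -
  have "(\<lambda>p. T1 (fst p) (snd p)) = (\<lambda>p::real\<times>real. if 0 < snd p \<and> snd p < fst p \<and> fst p \<le> 2 * snd p then (Phi W (snd p))^2 * ennreal (1/(snd p)^2) else 0)"
    by (auto simp: T1_def indicator_def fun_eq_iff)
  also have "\<dots> \<in> borel_measurable (lborel \<Otimes>\<^sub>M lborel)" by measurable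
  finally show ?thesis .
qed

lemma T2_meas[measurable]: "(\<lambda>p. T2 (fst p) (snd p)) \<in> borel_measurable (lborel \<Otimes>\<^sub>M lborel)"
proof -
  have "(\<lambda>p. T2 (fst p) (snd p)) = (\<lambda>p::real\<times>real. if 0 < snd p \<and> snd p < fst p / 2 then (Phi W (fst p))^2 * ennreal (1/(fst p)^2) else 0)"
    by (auto simp: T2_def indicator_def fun_eq_iff)
  also have "\<dots> \<in> borel_measurable (lborel \<Otimes>\<^sub>M lborel)" by measurable
  finally show ?thesis .
qed

lemma T3_meas[measurable]: "(\<lambda>p. T3 (fst p) (snd p)) \<in> borel_measurable (lborel \<Otimes>\<^sub>M lborel)"
proof -
  have "(\<lambda>p. T3 (fst p) (snd p)) = (\<lambda>p::real\<times>real. if 0 < snd p \<and> 2 * snd p \<le> fst p then (Phi W (snd p))^2 * ennreal (1/(fst p)^2) else 0)"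
    by (auto simp: T3_def indicator_def fun_eq_iff)
  also have "\<dots> \<in> borel_measurable (lborel \<Otimes>\<^sub>M lborel)" by measurable
  finally show ?thesis .
qed

lemma int_T1: "(\<integral>\<^sup>+ p. T1 (fst p) (snd p) \<partial>(lborel \<Otimes>\<^sub>M lborel)) = HH"
proof -
  have "(\<integral>\<^sup>+ p. T1 (fst p) (snd p) \<partial>(lborel \<Otimes>\<^sub>M lborel)) = (\<integral>\<^sup>+ y. \<integral>\<^sup>+ x. T1 x y \<partial>lborel \<partial>lborel)"
    using lborel_pair.nn_integral_snd[OF T1_meas] by simp
  also have "\<dots> = HH" unfolding HH_def
  proof (intro nn_integral_cong)
    fix y :: real
    show "(\<integral>\<^sup>+ x. T1 x y \<partial>lborel) = (Phi W y)^2 * ennreal (1/y) * indicator {0<..} y"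
    proof (cases "y > 0")
      case False thus ?thesis by (simp add: T1_def)
    next
      case True
      have "(\<integral>\<^sup>+ x. T1 x y \<partial>lborel) = (\<integral>\<^sup>+ x. ((Phi W y)^2 * ennreal (1/y^2)) * indicator {y<..2*y} x \<partial>lborel)"
        using True by (intro nn_integral_cong) (simp add: T1_def ac_simps)
      also have "\<dots> = ((Phi W y)^2 * ennreal (1/y^2)) * emeasure lborel {y<..2*y}"
        by (simp add: nn_integral_cmult_indicator)
      also have "emeasure lborel {y<..2*y} = ennreal y" using True by simp
      also have "((Phi W y)^2 * ennreal (1/y^2)) * ennreal y = (Phi W y)^2 * ennreal (1/y)"
      proof -
        have "ennreal (1/y^2) * ennreal y = ennreal (1/y^2 * y)" by (rule ennreal_mult[symmetric]) (use True in auto)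
        also have "1/y^2 * y = 1/y" using True by (simp add: power2_eq_square)
        finally show ?thesis by (simp add: mult.assoc)
      qed
      finally show ?thesis using True by simp
    qed
  qed
  finally show ?thesis .
qed

lemma int_T2: "(\<integral>\<^sup>+ p. T2 (fst p) (snd p) \<partial>(lborel \<Otimes>\<^sub>M lborel)) = ennreal (1/2) * HH"
proof -
  have "(\<integral>\<^sup>+ p. T2 (fst p) (snd p) \<partial>(lborel \<Otimes>\<^sub>M lborel)) = (\<integral>\<^sup>+ x. \<integral>\<^sup>+ y. T2 x y \<partial>lborel \<partial>lborel)"
    using lborel.nn_integral_fst[OF T2_meas] by simp
  also have "\<dots> = (\<integral>\<^sup>+ x. ennreal (1/2) * ((Phi W x)^2 * ennreal (1/x) * indicator {0<..} x) \<partial>lborel)"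
  proof (intro nn_integral_cong)
    fix x :: real
    show "(\<integral>\<^sup>+ y. T2 x y \<partial>lborel) = ennreal (1/2) * ((Phi W x)^2 * ennreal (1/x) * indicator {0<..} x)"
    proof (cases "x > 0")
      case False
      hence "\<And>y. T2 x y = 0" by (auto simp: T2_def indicator_def)
      thus ?thesis using False by simp
    next
      case True
      have "(\<integral>\<^sup>+ y. T2 x y \<partial>lborel) = (\<integral>\<^sup>+ y. ((Phi W x)^2 * ennreal (1/x^2)) * indicator {0<..<x/2} y \<partial>lborel)"
        by (intro nn_integral_cong) (simp add: T2_def ac_simps)
      also have "\<dots> = ((Phi W x)^2 * ennreal (1/x^2)) * emeasure lborel {0<..<x/2}"
        by (simp add: nn_integral_cmult_indicator)
      also have "emeasure lborel {0<..<x/2} = ennreal (x/2)" using True by simp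
      also have "((Phi W x)^2 * ennreal (1/x^2)) * ennreal (x/2) = ennreal (1/2) * ((Phi W x)^2 * ennreal (1/x))"
      proof -
        have "ennreal (1/x^2) * ennreal (x/2) = ennreal (1/x^2 * (x/2))" by (rule ennreal_mult[symmetric]) (use True in auto)
        also have "1/x^2 * (x/2) = (1/2) * (1/x)" using True by (simp add: power2_eq_square)
        also have "ennreal ((1/2) * (1/x)) = ennreal (1/2) * ennreal (1/x)" by (rule ennreal_mult) (use True in auto)
        finally have e: "ennreal (1/x^2) * ennreal (x/2) = ennreal (1/2) * ennreal (1/x)" .
        have "((Phi W x)^2 * ennreal (1/x^2)) * ennreal (x/2) = (Phi W x)^2 * (ennreal (1/x^2) * ennreal (x/2))"
          by (simp only: mult.assoc)
        also have "\<dots> = (Phi W x)^2 * (ennreal (1/2) * ennreal (1/x))" by (simp only: e)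
        also have "\<dots> = ennreal (1/2) * ((Phi W x)^2 * ennreal (1/x))" by (simp only: mult.left_commute)
        finally show ?thesis .
      qed
      finally show ?thesis using True by simp
    qed
  qed
  also have "\<dots> = ennreal (1/2) * HH" unfolding HH_def by (rule nn_integral_cmult) measurable
  finally show ?thesis .
qed

lemma int_T3: "(\<integral>\<^sup>+ p. T3 (fst p) (snd p) \<partial>(lborel \<Otimes>\<^sub>M lborel)) = ennreal (1/2) * HH"
proof -
  have "(\<integral>\<^sup>+ p. T3 (fst p) (snd p) \<partial>(lborel \<Otimes>\<^sub>M lborel)) = (\<integral>\<^sup>+ y. \<integral>\<^sup>+ x. T3 x y \<partial>lborel \<partial>lborel)"
    using lborel_pair.nn_integral_snd[OF T3_meas] by simp
  also have "\<dots> = (\<integral>\<^sup>+ y. ennreal (1/2) * ((Phi W y)^2 * ennreal (1/y) * indicator {0<..} y) \<partial>lborel)"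
  proof (intro nn_integral_cong)
    fix y :: real
    show "(\<integral>\<^sup>+ x. T3 x y \<partial>lborel) = ennreal (1/2) * ((Phi W y)^2 * ennreal (1/y) * indicator {0<..} y)"
    proof (cases "y > 0")
      case False thus ?thesis by (simp add: T3_def)
    next
      case True
      have "(\<integral>\<^sup>+ x. T3 x y \<partial>lborel) = (\<integral>\<^sup>+ x. (Phi W y)^2 * ennreal (indicator {2*y..} x * x powr (-2)) \<partial>lborel)"
      proof (intro nn_integral_cong)
        fix x :: real
        show "T3 x y = (Phi W y)^2 * ennreal (indicator {2*y..} x * x powr (-2))"
        proof (cases "x \<ge> 2*y")
          case True': True
          hence "x > 0" using True by simp
          hence "x powr (-2) = 1/x^2" by (simp add: powr_minus powr_realpow divide_inverse)
          thus ?thesis using True True' by (simp add: T3_def)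
        qed (simp add: T3_def)
      qed
      also have "\<dots> = (Phi W y)^2 * (\<integral>\<^sup>+ x. ennreal (indicator {2*y..} x * x powr (-2)) \<partial>lborel)"
        by (rule nn_integral_cmult) measurable
      also have "(\<integral>\<^sup>+ x. ennreal (indicator {2*y..} x * x powr (-2)) \<partial>lborel) = ennreal ((2*y) powr (-1))"
        using nn_int_pow_inf[of "-2" "2*y"] True by simp
      also have "(2*y) powr (-1) = (1/2) * (1/y)" using True by (simp add: powr_minus inverse_eq_divide)
      also have "ennreal ((1/2) * (1/y)) = ennreal (1/2) * ennreal (1/y)" by (rule ennreal_mult) (use True in auto)
      finally show ?thesis using True by (simp add: ac_simps)
    qed
  qed
  also have "\<dots> = ennreal (1/2) * HH" unfolding HH_def by (rule nn_integral_cmult) measurable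
  finally show ?thesis .
qed

lemma hfun_eq: "hfun t \<tau> = ennreal ((CK c)^2) * (T1 t \<tau> + 8 * T2 t \<tau> + 8 * T3 t \<tau>)"
  by (simp add: hfun_def T1_def T2_def T3_def)

lemma hfun_meas[measurable]: "(\<lambda>p. hfun (fst p) (snd p)) \<in> borel_measurable (lborel \<Otimes>\<^sub>M lborel)"
  unfolding hfun_eq by measurable

lemma int_hfun: "(\<integral>\<^sup>+ p. hfun (fst p) (snd p) \<partial>(lborel \<Otimes>\<^sub>M lborel)) = ennreal (9 * (CK c)^2) * HH"
proof -
  have "(\<integral>\<^sup>+ p. hfun (fst p) (snd p) \<partial>(lborel \<Otimes>\<^sub>M lborel))
     = ennreal ((CK c)^2) * ((\<integral>\<^sup>+ p. T1 (fst p) (snd p) \<partial>(lborel \<Otimes>\<^sub>M lborel))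
        + 8 * (\<integral>\<^sup>+ p. T2 (fst p) (snd p) \<partial>(lborel \<Otimes>\<^sub>M lborel))
        + 8 * (\<integral>\<^sup>+ p. T3 (fst p) (snd p) \<partial>(lborel \<Otimes>\<^sub>M lborel)))"
    unfolding hfun_eq
    by (simp add: nn_integral_cmult nn_integral_add)
  also have "\<dots> = ennreal ((CK c)^2) * (HH + 8 * (ennreal (1/2) * HH) + 8 * (ennreal (1/2) * HH))"
    by (simp add: int_T1 int_T2 int_T3)
  also have "8 * (ennreal (1/2) * HH) = 4 * HH"
  proof -
    have "(8::ennreal) * ennreal (1/2) = ennreal 8 * ennreal (1/2)" by simp
    also have "\<dots> = ennreal (8 * (1/2))" by (rule ennreal_mult[symmetric]) auto
    also have "\<dots> = 4" by simp
    finally show ?thesis by (simp add: mult.assoc[symmetric])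
  qed
  also have "HH + 4 * HH + 4 * HH = (1 + 4 + 4) * HH" by (simp only: distrib_right mult_1)
  also have "(1 + 4 + 4 :: ennreal) = 9" by simp
  also have "ennreal ((CK c)^2) * (9 * HH) = ennreal (9 * (CK c)^2) * HH"
    by (simp add: ennreal_mult ac_simps)
  finally show ?thesis .
qed

end
context Wsetup
begin

lemma Gag:
  "(\<integral>\<^sup>+ p. ennreal ((vv c W (fst p) - vv c W (snd p))^2 / (fst p - snd p)^2)
       * indicator ({0<..} \<times> {0<..}) p \<partial>(lborel \<Otimes>\<^sub>M lborel)) \<le> ennreal (18 * (CK c)^2) * HH"
proof -
  have sw[measurable]: "(\<lambda>p. hfun (snd p) (fst p)) \<in> borel_measurable (lborel \<Otimes>\<^sub>M lborel)"
    using measurable_pair_swap[OF hfun_meas] by (simp add: case_prod_beta')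
  have "(\<integral>\<^sup>+ p. ennreal ((vv c W (fst p) - vv c W (snd p))^2 / (fst p - snd p)^2)
       * indicator ({0<..} \<times> {0<..}) p \<partial>(lborel \<Otimes>\<^sub>M lborel))
     \<le> (\<integral>\<^sup>+ p. hfun (fst p) (snd p) + hfun (snd p) (fst p) \<partial>(lborel \<Otimes>\<^sub>M lborel))"
  proof (intro nn_integral_mono)
    fix p :: "real \<times> real"
    obtain t \<tau> where p: "p = (t, \<tau>)" by (cases p)
    show "ennreal ((vv c W (fst p) - vv c W (snd p))^2 / (fst p - snd p)^2) * indicator ({0<..} \<times> {0<..}) p
          \<le> hfun (fst p) (snd p) + hfun (snd p) (fst p)"
    proof (cases "t > 0 \<and> \<tau> > 0")
      case False thus ?thesis by (simp add: p)
    next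
      case True
      show ?thesis
      proof (cases "\<tau> < t")
        case lt: True
        have "ennreal ((vv c W t - vv c W \<tau>)^2 / (t - \<tau>)^2) \<le> hfun t \<tau>"
          using True lt by (intro G1) auto
        thus ?thesis using True by (simp add: p add_increasing2)
      next
        case False
        show ?thesis
        proof (cases "t < \<tau>")
          case gt: True
          have "ennreal ((vv c W \<tau> - vv c W t)^2 / (\<tau> - t)^2) \<le> hfun \<tau> t"
            using True gt by (intro G1) auto
          moreover have "(vv c W t - vv c W \<tau>)^2 / (t - \<tau>)^2 = (vv c W \<tau> - vv c W t)^2 / (\<tau> - t)^2"
            by (simp add: power2_commute)
          ultimately show ?thesis using True by (simp add: p add_increasing)
        next
          case False
          hence "t = \<tau>" using \<open>\<not> \<tau> < t\<close> by simp
          thus ?thesis by (simp add: p)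
        qed
      qed
    qed
  qed
  also have "\<dots> = (\<integral>\<^sup>+ p. hfun (fst p) (snd p) \<partial>(lborel \<Otimes>\<^sub>M lborel)) + (\<integral>\<^sup>+ p. hfun (snd p) (fst p) \<partial>(lborel \<Otimes>\<^sub>M lborel))"
    by (rule nn_integral_add) measurable
  also have "(\<integral>\<^sup>+ p. hfun (snd p) (fst p) \<partial>(lborel \<Otimes>\<^sub>M lborel)) = (\<integral>\<^sup>+ p. hfun (fst p) (snd p) \<partial>(lborel \<Otimes>\<^sub>M lborel))"
  proof -
    have "(\<integral>\<^sup>+ p. hfun (snd p) (fst p) \<partial>(lborel \<Otimes>\<^sub>M lborel)) = (\<integral>\<^sup>+ x. \<integral>\<^sup>+ y. hfun y x \<partial>lborel \<partial>lborel)"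
      using lborel.nn_integral_fst[OF sw] by simp
    also have "\<dots> = (\<integral>\<^sup>+ p. hfun (fst p) (snd p) \<partial>(lborel \<Otimes>\<^sub>M lborel))"
      using lborel_pair.nn_integral_snd[OF hfun_meas] by simp
    finally show ?thesis .
  qed
  also have "(\<integral>\<^sup>+ p. hfun (fst p) (snd p) \<partial>(lborel \<Otimes>\<^sub>M lborel)) + (\<integral>\<^sup>+ p. hfun (fst p) (snd p) \<partial>(lborel \<Otimes>\<^sub>M lborel))
      = ennreal (18 * (CK c)^2) * HH"
  proof -
    have "ennreal (9 * (CK c)^2) * HH + ennreal (9 * (CK c)^2) * HH = (ennreal (9 * (CK c)^2) + ennreal (9 * (CK c)^2)) * HH"
      by (simp add: distrib_right)
    also have "ennreal (9 * (CK c)^2) + ennreal (9 * (CK c)^2) = ennreal (18 * (CK c)^2)"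
      by (subst ennreal_plus[symmetric]) auto
    finally show ?thesis by (simp add: int_hfun)
  qed
  finally show ?thesis .
qed

end
context Wsetup
begin

lemma sq_bound: "t > 0 \<Longrightarrow> ennreal ((vv c W t)^2) \<le> ennreal ((CK c)^2) * (Phi W t)^2"
proof -
  assume t: "t > 0"
  have "ennreal ((vv c W t)^2) = (ennreal \<bar>vv c W t\<bar>)^2"
    using ennreal_sq_mult[of 1 "vv c W t"] by simp
  also have "\<dots> \<le> (ennreal (CK c) * Phi W t)^2" by (rule power_mono[OF V2[OF t]]) simp
  also have "\<dots> = ennreal ((CK c)^2) * (Phi W t)^2"
    using CK_pos[of c] by (simp add: power_mult_distrib ennreal_power)
  finally show ?thesis .
qed

lemma total_bound:
  assumes R: "R > 0" and WR: "\<And>s. s > R \<Longrightarrow> W s = 0"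
    and v: "\<And>t. t > 0 \<Longrightarrow> v t = vv c W t"
  shows "Ht_half_sq v \<le> ennreal ((CK c)^2 * (5*R + 84)) * IW"
proof -
  have L: "L2_sq v \<le> ennreal ((CK c)^2 * (5*R)) * IW"
  proof -
    have "L2_sq v \<le> (\<integral>\<^sup>+ t. ennreal ((CK c)^2) * ((Phi W t)^2 * indicator {0<..} t) \<partial>lborel)"
      unfolding L2_sq_def
    proof (intro nn_integral_mono)
      fix t :: real
      show "ennreal ((v t)^2) * indicator {0<..} t \<le> ennreal ((CK c)^2) * ((Phi W t)^2 * indicator {0<..} t)"
        using sq_bound[of t] v[of t] by (cases "t > 0") (auto simp: mult.assoc[symmetric])
    qed
    also have "\<dots> = ennreal ((CK c)^2) * (\<integral>\<^sup>+ t. (Phi W t)^2 * indicator {0<..} t \<partial>lborel)"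
      by (rule nn_integral_cmult) measurable
    also have "\<dots> \<le> ennreal ((CK c)^2) * (ennreal (5*R) * IW)"
      by (intro mult_left_mono L_bound[OF R WR]) auto
    also have "\<dots> = ennreal ((CK c)^2 * (5*R)) * IW"
      using R by (simp add: ennreal_mult mult.assoc)
    finally show ?thesis .
  qed
  have Hv: "(\<integral>\<^sup>+ x. ennreal ((v x)^2 / x) * indicator {0<..} x \<partial>lborel) \<le> ennreal ((CK c)^2 * (25/6)) * IW"
  proof -
    have "(\<integral>\<^sup>+ x. ennreal ((v x)^2 / x) * indicator {0<..} x \<partial>lborel)
        \<le> (\<integral>\<^sup>+ t. ennreal ((CK c)^2) * ((Phi W t)^2 * ennreal (1/t) * indicator {0<..} t) \<partial>lborel)"
    proof (intro nn_integral_mono)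
      fix t :: real
      show "ennreal ((v t)^2 / t) * indicator {0<..} t \<le> ennreal ((CK c)^2) * ((Phi W t)^2 * ennreal (1/t) * indicator {0<..} t)"
      proof (cases "t > 0")
        case True
        have "ennreal ((v t)^2 / t) = ennreal ((vv c W t)^2) * ennreal (1/t)"
          using True v[OF True] by (simp add: ennreal_mult[symmetric] divide_inverse)
        also have "\<dots> \<le> ennreal ((CK c)^2) * (Phi W t)^2 * ennreal (1/t)"
          by (rule mult_right_mono[OF sq_bound[OF True]]) simp
        finally show ?thesis using True by (simp add: mult.assoc)
      qed simp
    qed
    also have "\<dots> = ennreal ((CK c)^2) * HH"
      unfolding HH_def by (rule nn_integral_cmult) measurable
    also have "\<dots> \<le> ennreal ((CK c)^2) * (ennreal (25/6) * IW)"
      using H_bound unfolding HH_def by (intro mult_left_mono) auto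
    also have "\<dots> = ennreal ((CK c)^2 * (25/6)) * IW"
    proof -
      have "ennreal ((CK c)^2) * ennreal (25/6) = ennreal ((CK c)^2 * (25/6))"
        by (rule ennreal_mult[symmetric]) auto
      thus ?thesis by (simp only: mult.assoc[symmetric])
    qed
    finally show ?thesis .
  qed
  have Gv: "(\<integral>\<^sup>+ p. ennreal ((v (fst p) - v (snd p))^2 / (fst p - snd p)^2)
                 * indicator ({0<..} \<times> {0<..}) p \<partial>(lborel \<Otimes>\<^sub>M lborel)) \<le> ennreal ((CK c)^2 * 75) * IW"
  proof -
    have "(\<integral>\<^sup>+ p. ennreal ((v (fst p) - v (snd p))^2 / (fst p - snd p)^2)
                 * indicator ({0<..} \<times> {0<..}) p \<partial>(lborel \<Otimes>\<^sub>M lborel))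
        = (\<integral>\<^sup>+ p. ennreal ((vv c W (fst p) - vv c W (snd p))^2 / (fst p - snd p)^2)
                 * indicator ({0<..} \<times> {0<..}) p \<partial>(lborel \<Otimes>\<^sub>M lborel))"
      by (intro nn_integral_cong) (auto simp: indicator_def v)
    also have "\<dots> \<le> ennreal (18 * (CK c)^2) * HH" by (rule Gag)
    also have "\<dots> \<le> ennreal (18 * (CK c)^2) * (ennreal (25/6) * IW)"
      using H_bound unfolding HH_def by (intro mult_left_mono) auto
    also have "\<dots> = ennreal ((CK c)^2 * 75) * IW"
    proof -
      have "ennreal (18 * (CK c)^2) * ennreal (25/6) = ennreal (18 * (CK c)^2 * (25/6))"
        by (rule ennreal_mult[symmetric]) auto
      also have "18 * (CK c)^2 * (25/6) = (CK c)^2 * 75" by simp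
      finally show ?thesis by (simp only: mult.assoc[symmetric])
    qed
    finally show ?thesis .
  qed
  have "Ht_half_sq v \<le> ennreal ((CK c)^2 * (5*R)) * IW + ennreal ((CK c)^2 * 75) * IW
                        + 2 * (ennreal ((CK c)^2 * (25/6)) * IW)"
    unfolding Ht_half_sq_def by (intro add_mono L Hv Gv mult_left_mono) auto
  also have "\<dots> = ennreal ((CK c)^2 * (5*R) + (CK c)^2 * 75 + 2 * ((CK c)^2 * (25/6))) * IW"
  proof -
    have e: "(2::ennreal) * ennreal ((CK c)^2 * (25/6)) = ennreal (2 * ((CK c)^2 * (25/6)))"
      by (subst ennreal_mult) auto
    have "(2::ennreal) * (ennreal ((CK c)^2 * (25/6)) * IW) = ennreal (2 * ((CK c)^2 * (25/6))) * IW"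
      by (simp only: mult.assoc[symmetric] e)
    moreover have "ennreal ((CK c)^2 * (5*R) + (CK c)^2 * 75 + 2 * ((CK c)^2 * (25/6)))
       = ennreal ((CK c)^2 * (5*R)) + ennreal ((CK c)^2 * 75) + ennreal (2 * ((CK c)^2 * (25/6)))"
    proof -
      have n: "0 \<le> (CK c)^2 * (5*R)" "0 \<le> (CK c)^2 * 75" "0 \<le> 2 * ((CK c)^2 * (25/6))" using R by auto
      have "ennreal ((CK c)^2 * (5*R) + (CK c)^2 * 75 + 2 * ((CK c)^2 * (25/6)))
         = ennreal ((CK c)^2 * (5*R) + (CK c)^2 * 75) + ennreal (2 * ((CK c)^2 * (25/6)))"
        by (rule ennreal_plus) (use n in auto)
      also have "ennreal ((CK c)^2 * (5*R) + (CK c)^2 * 75) = ennreal ((CK c)^2 * (5*R)) + ennreal ((CK c)^2 * 75)"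
        by (rule ennreal_plus) (use n in auto)
      finally show ?thesis .
    qed
    ultimately show ?thesis by (simp add: distrib_right)
  qed
  also have "\<dots> \<le> ennreal ((CK c)^2 * (5*R + 84)) * IW"
    by (intro mult_right_mono ennreal_leI) (auto simp: algebra_simps)
  finally show ?thesis .
qed

end

lemma smooth_cont: "smooth_fun f \<Longrightarrow> continuous_on UNIV f"
proof -
  assume "smooth_fun f"
  hence "\<forall>x. f differentiable (at x)" unfolding smooth_fun_def by (metis funpow_0 id_apply)
  thus ?thesis by (intro continuous_at_imp_continuous_on) (auto intro: differentiable_imp_continuous_within)
qed

lemma cos_lt_1:
  assumes "0 < \<theta>" "\<theta> < pi"
  shows "cos (2*\<theta>) < 1"
proof -
  have "cos (2*\<theta>) \<noteq> 1"
  proof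
    assume "cos (2*\<theta>) = 1"
    then obtain n :: int where n: "2*\<theta> = of_int n * (2*pi)" by (auto simp: cos_one_2pi_int)
    hence "\<theta> = of_int n * pi" by simp
    hence "0 < of_int n * pi" "of_int n * pi < 1 * pi" using assms by auto
    hence "0 < real_of_int n" "real_of_int n < 1" by (auto simp: zero_less_mult_iff mult_less_cancel_right pi_gt_zero)
    hence "0 < n" "n < 1" by simp_all
    thus False by simp
  qed
  moreover have "cos (2*\<theta>) \<le> 1" by simp
  ultimately show ?thesis by linarith
qed

theorem lemma10:
  fixes chi :: "real \<Rightarrow> real" and \<theta> :: real
  assumes "Cc_plus chi" and "0 < \<theta>" and "\<theta> < pi"
  shows "\<exists>C::real. \<forall>u. C0_plus u \<and> u \<noteq> (\<lambda>_. 0) \<longrightarrow>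
           Ht_half_sq (A_diff \<theta> (\<lambda>s. chi s * u s)) \<le> ennreal C * L2_sq u"
proof -
  obtain g where g: "smooth_fun g" "bounded {x. g x \<noteq> 0}" "\<forall>x\<ge>0. chi x = g x"
    using assms(1) unfolding Cc_plus_def by blast
  have gc: "continuous_on UNIV g" by (rule smooth_cont[OF g(1)])
  obtain Rg where Rg: "\<forall>x\<in>{x. g x \<noteq> 0}. norm x \<le> Rg" using g(2) unfolding bounded_iff by blast
  define R where "R = max Rg 1"
  have R: "R > 0" by (simp add: R_def)
  have gR: "\<And>s. s > R \<Longrightarrow> g s = 0"
  proof (rule ccontr)
    fix s assume "s > R" "g s \<noteq> 0"
    hence "norm s \<le> Rg" using Rg by blast
    thus False using \<open>s > R\<close> by (simp add: R_def)
  qed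
  have "compact (g ` {0..R})"
    by (rule compact_continuous_image) (use gc in \<open>auto intro: continuous_on_subset\<close>)
  then obtain Mg where Mg: "\<forall>y\<in>g ` {0..R}. norm y \<le> Mg" using compact_imp_bounded bounded_iff by metis
  have Mg0: "Mg \<ge> 0" using Mg[rule_format, of "g 0"] R by force
  have gMg: "\<And>s. s > 0 \<Longrightarrow> (g s)^2 \<le> Mg^2"
  proof -
    fix s :: real assume s: "s > 0"
    show "(g s)^2 \<le> Mg^2"
    proof (cases "s \<le> R")
      case True
      hence "\<bar>g s\<bar> \<le> Mg" using Mg s by auto
      hence "\<bar>g s\<bar>^2 \<le> Mg^2" by (intro power_mono) auto
      thus ?thesis by simp
    next
      case False thus ?thesis using gR[of s] by simp
    qed
  qed
  define c where "c = cos (2*\<theta>)"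
  have c: "-1 \<le> c" "c < 1" using cos_lt_1[OF assms(2,3)] by (auto simp: c_def)
  define C where "C = (CK c)^2 * (5*R + 84) * Mg^2"
  show ?thesis
  proof (intro exI[of _ C] allI impI)
    fix u :: "real \<Rightarrow> real"
    assume "C0_plus u \<and> u \<noteq> (\<lambda>_. 0)"
    hence u: "smooth_fun u" "\<exists>a b. 0 < a \<and> (\<forall>x. x \<notin> {a..b} \<longrightarrow> u x = 0)" unfolding C0_plus_def by auto
    obtain a b where ab: "0 < a" "\<And>x. x \<notin> {a..b} \<Longrightarrow> u x = 0" using u(2) by blast
    have uc: "continuous_on UNIV u" by (rule smooth_cont[OF u(1)])
    define W where "W s = g s * u s" for s
    interpret Wsetup c W a b
    proof
      show "-1 \<le> c" "c < 1" by (fact c)+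
      show "continuous_on UNIV W" unfolding W_def using gc uc by (intro continuous_intros)
      show "0 < a" by (fact ab)
      show "\<And>s. s \<notin> {a..b} \<Longrightarrow> W s = 0" using ab(2) by (simp add: W_def)
    qed
    have v: "A_diff \<theta> (\<lambda>s. chi s * u s) t = vv c W t" if t: "t > 0" for t
      unfolding A_diff_def vv_def
    proof (rule set_lebesgue_integral_cong)
      show "{(0::real)<..} \<in> sets lborel" by simp
      show "\<forall>s. s \<in> {0<..} \<longrightarrow> (frakK (pi/2) (t/s) - frakK \<theta> (t/s)) * (chi s * u s) * (s * t) powr (-1/4) = Kst c t s * W s"
      proof (intro allI impI)
        fix s :: real assume "s \<in> {0<..}"
        hence s: "s > 0" by simp
        have e1: "frakK (pi/2) (t/s) * (s * t) powr (-1/4) = (t^2 + 2*t* s + s^2) powr (-1/4)"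
          using frakK_eq[OF t s, of "pi/2"] by simp
        have e2: "frakK \<theta> (t/s) * (s * t) powr (-1/4) = (t^2 - 2*c*t* s + s^2) powr (-1/4)"
          using frakK_eq[OF t s, of \<theta>] by (simp add: c_def)
        have "(frakK (pi/2) (t/s) - frakK \<theta> (t/s)) * (chi s * u s) * (s * t) powr (-1/4)
            = (frakK (pi/2) (t/s) * (s * t) powr (-1/4) - frakK \<theta> (t/s) * (s * t) powr (-1/4)) * (g s * u s)"
          using g(3) s by (simp add: algebra_simps)
        also have "\<dots> = Kst c t s * W s" unfolding e1 e2 Kst_def W_def ..
        finally show "(frakK (pi/2) (t/s) - frakK \<theta> (t/s)) * (chi s * u s) * (s * t) powr (-1/4) = Kst c t s * W s" .
      qed
    qed
    have WR: "\<And>s. s > R \<Longrightarrow> W s = 0" using gR by (simp add: W_def)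
    have "Ht_half_sq (A_diff \<theta> (\<lambda>s. chi s * u s)) \<le> ennreal ((CK c)^2 * (5*R + 84)) * IW"
      by (rule total_bound[OF R WR v])
    also have "IW \<le> ennreal (Mg^2) * L2_sq u"
    proof -
      have "IW \<le> (\<integral>\<^sup>+ s. ennreal (Mg^2) * (ennreal ((u s)^2) * indicator {0<..} s) \<partial>lborel)"
        unfolding IW_def
      proof (intro nn_integral_mono)
        fix s :: real
        show "ennreal ((W s)^2) * indicator {0<..} s \<le> ennreal (Mg^2) * (ennreal ((u s)^2) * indicator {0<..} s)"
        proof (cases "s > 0")
          case True
          have "(W s)^2 = (g s)^2 * (u s)^2" by (simp add: W_def power_mult_distrib)
          also have "\<dots> \<le> Mg^2 * (u s)^2" using gMg[OF True] by (intro mult_right_mono) auto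
          finally have "ennreal ((W s)^2) \<le> ennreal (Mg^2 * (u s)^2)" by (rule ennreal_leI)
          also have "\<dots> = ennreal (Mg^2) * ennreal ((u s)^2)" by (rule ennreal_mult) auto
          finally show ?thesis using True by simp
        qed simp
      qed
      also have "\<dots> = ennreal (Mg^2) * L2_sq u"
        unfolding L2_sq_def
      proof (rule nn_integral_cmult)
        have [measurable]: "u \<in> borel_measurable borel" by (rule borel_measurable_continuous_onI[OF uc])
        show "(\<lambda>x. ennreal ((u x)\<^sup>2) * indicator {0<..} x) \<in> borel_measurable lborel" by measurable
      qed
      finally show ?thesis .
    qed
    hence "ennreal ((CK c)^2 * (5*R + 84)) * IW \<le> ennreal ((CK c)^2 * (5*R + 84)) * (ennreal (Mg^2) * L2_sq u)"
      by (rule mult_left_mono) simp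
    also have "\<dots> = ennreal C * L2_sq u"
    proof -
      have "ennreal ((CK c)^2 * (5*R + 84)) * ennreal (Mg^2) = ennreal C"
        unfolding C_def by (rule ennreal_mult[symmetric]) (use R in auto)
      thus ?thesis by (simp only: mult.assoc[symmetric])
    qed
    finally show "Ht_half_sq (A_diff \<theta> (\<lambda>s. chi s * u s)) \<le> ennreal C * L2_sq u" .
  qed
qed

end
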